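(* Suppose that $\mathcal X$ is a wide family of subsets of $\mathbb N$ and $\mathfrak A=(\alpha_X:X\in\mathcal X)$ is coherent. Then the C*-algebra $\mathcal M_{\mathcal X,\mathfrak A}$ is generated by its projections.
   Context: Fix an orthonormal basis $(e_k)$ of $\ell_2$. For $A\subseteq\mathbb N$, $P_A$ is the projection onto $\overline{\mathrm{span}}\{e_{2k},e_{2k+1}:k\in A\}$; $H_n=\mathrm{span}\{e_{2n},e_{2n+1}\}$. $\mathcal A_0$ is the set of $T\in\mathcal B(\ell_2)$ with $\langle Te_k,e_m\rangle\ne0\Rightarrow\{k,m\}\subseteq\{2n,2n+1\}$ for some $n$, written $T=(T_n)$ with $T_n\in\mathcal B(H_n)$; $\mathcal A_0(X)=\{T\in\mathcal A_0:T_n=0\ \forall n\notin X\}$. For $\alpha\in(71/72,1]$, $f_{\alpha,2n}=\alpha e_{2n}+\sqrt{1-\alpha^2}e_{2n+1}$, $f_{\alpha,2n+1}=\sqrt{1-\alpha^2}e_{2n}-\alpha e_{2n+1}$; $\mathcal D(X,\alpha)$: $T\in\mathcal A_0(X)$ with $T_n$ diagonal in $\{f_{\alpha,2n},f_{\alpha,2n+1}\}$ for $n\in X$; $\mathcal D_{\mathcal K}(X,\alpha)=\{S+R:S\in\mathcal D(X,\alpha),R\in\mathcal K(\ell_2)\cap\mathcal A_0(X)\}$. $\mathcal M_{\mathcal X,\mathfrak A}=\{T\in\mathcal A_0:P_XTP_X\in\mathcal D_{\mathcal K}(X,\alpha_X)\ \forall X\in\mathcal X\}$ (a C*-algebra).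 $\mathcal X$ is wide if every infinite subset of $\mathbb N$ has infinite intersection with some member of $\mathcal X$; $\mathfrak A$ is coherent if $\alpha_X\in(71/72,1]$ for all $X$ and $\alpha_X=\alpha_Y$ whenever $X\cap Y$ is infinite. *)

theory Defs
  imports Complex_Main
begin

text \<open>Vectors are functions nat => complex; operators are
 functions (nat => complex) => (nat => complex) that map l2 into l2, are linear
 and bounded on l2, and vanish outside l2 (this normalisation makes operator
 equality coincide with equality on l2).\<close>

definition l2 :: "(nat \<Rightarrow> complex) set" where
  "l2 = {x. summable (\<lambda>k. (cmod (x k))\<^sup>2)}"

definition l2norm :: "(nat \<Rightarrow> complex) \<Rightarrow> real" where
  "l2norm x = sqrt (\<Sum>k. (cmod (x k))\<^sup>2)"

definition l2inner :: "(nat \<Rightarrow> complex) \<Rightarrow> (nat \<Rightarrow> complex) \<Rightarrow> complex" where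
  "l2inner x y = (\<Sum>k. x k * cnj (y k))"

definition basis_vec :: "nat \<Rightarrow> nat \<Rightarrow> complex" ("\<e>") where
  "basis_vec k = (\<lambda>m. if m = k then 1 else 0)"

type_synonym op = "(nat \<Rightarrow> complex) \<Rightarrow> (nat \<Rightarrow> complex)"

definition bounded_ops :: "op set" where
  "bounded_ops = {T.
     (\<forall>x\<in>l2. T x \<in> l2) \<and>
     (\<forall>x\<in>l2. \<forall>y\<in>l2. \<forall>a b. T (\<lambda>k. a * x k + b * y k) = (\<lambda>k. a * T x k + b * T y k)) \<and>
     (\<exists>C. \<forall>x\<in>l2. l2norm (T x) \<le> C * l2norm x) \<and>
     (\<forall>x. x \<notin> l2 \<longrightarrow> T x = (\<lambda>k. 0))}"

definition op_add :: "op \<Rightarrow> op \<Rightarrow> op" where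
  "op_add S T = (\<lambda>x k. S x k + T x k)"

definition op_diff :: "op \<Rightarrow> op \<Rightarrow> op" where
  "op_diff S T = (\<lambda>x k. S x k - T x k)"

definition op_scale :: "complex \<Rightarrow> op \<Rightarrow> op" where
  "op_scale c T = (\<lambda>x k. c * T x k)"

definition opnorm :: "op \<Rightarrow> real" where
  "opnorm T = Sup {l2norm (T x) | x. x \<in> l2 \<and> l2norm x \<le> 1}"

definition adj :: "op \<Rightarrow> op" where
  "adj T = (\<lambda>y. if y \<in> l2 then (THE z. z \<in> l2 \<and> (\<forall>x\<in>l2. l2inner (T x) y = l2inner x z))
               else (\<lambda>k. 0))"

definition compact_op :: "op \<Rightarrow> bool" where
  "compact_op T \<longleftrightarrow> T \<in> bounded_ops \<and>
     (\<forall>\<epsilon>>0. \<exists>F. finite F \<and> F \<subseteq> l2 \<and>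
        (\<forall>x\<in>l2. l2norm x \<le> 1 \<longrightarrow> (\<exists>y\<in>F. l2norm (\<lambda>k. T x k - y k) < \<epsilon>)))"

definition is_projection :: "op \<Rightarrow> bool" where
  "is_projection P \<longleftrightarrow> P \<in> bounded_ops \<and> P \<circ> P = P \<and> adj P = P"

definition projP :: "nat set \<Rightarrow> op" where
  "projP A = (\<lambda>x k. if x \<in> l2 \<and> k div 2 \<in> A then x k else 0)"

text \<open>A_0: block diagonal operators (<T e_k, e_m> = (T (e k)) m).\<close>
definition A0 :: "op set" where
  "A0 = {T \<in> bounded_ops. \<forall>k m. T (\<e> k) m \<noteq> 0 \<longrightarrow> (\<exists>n. {k, m} \<subseteq> {2*n, 2*n+1})}"

definition A0_on :: "nat set \<Rightarrow> op set" where
  "A0_on X = {T \<in> A0. \<forall>n. n \<notin> X \<longrightarrow> T (\<e> (2*n)) = (\<lambda>k. 0) \<and> T (\<e> (2*n+1)) = (\<lambda>k. 0)}"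

definition fvec :: "real \<Rightarrow> nat \<Rightarrow> nat \<Rightarrow> complex" where
  "fvec \<alpha> k = (if even k
     then (\<lambda>m. complex_of_real \<alpha> * \<e> k m + complex_of_real (sqrt (1 - \<alpha>\<^sup>2)) * \<e> (k+1) m)
     else (\<lambda>m. complex_of_real (sqrt (1 - \<alpha>\<^sup>2)) * \<e> (k-1) m - complex_of_real \<alpha> * \<e> k m))"

definition Dset :: "nat set \<Rightarrow> real \<Rightarrow> op set" where
  "Dset X \<alpha> = {T \<in> A0_on X. \<forall>n\<in>X. \<exists>c d.
      T (fvec \<alpha> (2*n)) = (\<lambda>m. c * fvec \<alpha> (2*n) m) \<and>
      T (fvec \<alpha> (2*n+1)) = (\<lambda>m. d * fvec \<alpha> (2*n+1) m)}"

definition DKset :: "nat set \<Rightarrow> real \<Rightarrow> op set" where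
  "DKset X \<alpha> = {op_add S R | S R. S \<in> Dset X \<alpha> \<and> compact_op R \<and> R \<in> A0_on X}"

definition Mset :: "nat set set \<Rightarrow> (nat set \<Rightarrow> real) \<Rightarrow> op set" where
  "Mset \<X> \<alpha> = {T \<in> A0. \<forall>X\<in>\<X>. projP X \<circ> T \<circ> projP X \<in> DKset X (\<alpha> X)}"

definition wide :: "nat set set \<Rightarrow> bool" where
  "wide \<X> \<longleftrightarrow> (\<forall>A. infinite A \<longrightarrow> (\<exists>X\<in>\<X>. infinite (A \<inter> X)))"

definition coherent :: "nat set set \<Rightarrow> (nat set \<Rightarrow> real) \<Rightarrow> bool" where
  "coherent \<X> \<alpha> \<longleftrightarrow> (\<forall>X\<in>\<X>. 71/72 < \<alpha> X \<and> \<alpha> X \<le> 1) \<and>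
     (\<forall>X\<in>\<X>. \<forall>Y\<in>\<X>. infinite (X \<inter> Y) \<longrightarrow> \<alpha> X = \<alpha> Y)"

definition is_cstar_subalg :: "op set \<Rightarrow> bool" where
  "is_cstar_subalg C \<longleftrightarrow> C \<subseteq> bounded_ops \<and>
     (\<forall>S\<in>C. \<forall>T\<in>C. op_add S T \<in> C) \<and>
     (\<forall>c. \<forall>T\<in>C. op_scale c T \<in> C) \<and>
     (\<forall>S\<in>C. \<forall>T\<in>C. S \<circ> T \<in> C) \<and>
     (\<forall>T\<in>C. adj T \<in> C) \<and>
     (\<forall>T\<in>bounded_ops. (\<forall>\<epsilon>>0. \<exists>S\<in>C. opnorm (op_diff T S) < \<epsilon>) \<longrightarrow> T \<in> C)"

definition cstar_gen :: "op set \<Rightarrow> op set" where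
  "cstar_gen S = \<Inter>{C. S \<subseteq> C \<and> is_cstar_subalg C}"

end

theory Submission
  imports Defs
begin

lemma sq_sum_le: "((u::real) + v)\<^sup>2 \<le> 2 * u\<^sup>2 + 2 * v\<^sup>2"
proof -
  have "0 \<le> (u - v)\<^sup>2" by simp
  thus ?thesis by (simp add: power2_eq_square algebra_simps)
qed

lemma l2_iff: "x \<in> l2 \<longleftrightarrow> summable (\<lambda>k. (cmod (x k))\<^sup>2)" by (simp add: l2_def)

lemma l2_zero[simp]: "(\<lambda>k. 0) \<in> l2" by (simp add: l2_def)

lemma l2_finsupp: assumes "\<And>k. k \<ge> N \<Longrightarrow> x k = 0" shows "x \<in> l2"
  unfolding l2_def by (auto intro!: summable_finite[of "{..<N}"] simp: assms) (metis assms not_le)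

lemma basis_l2[simp]: "\<e> k \<in> l2"
  by (rule l2_finsupp[of "Suc k"]) (simp add: basis_vec_def)

lemma l2_lin:
  assumes "x \<in> l2" "y \<in> l2" shows "(\<lambda>k. a * x k + b * y k) \<in> l2"
proof -
  have s: "summable (\<lambda>k. 2 * (cmod a)\<^sup>2 * (cmod (x k))\<^sup>2 + 2 * (cmod b)\<^sup>2 * (cmod (y k))\<^sup>2)"
    using assms by (auto simp: l2_def intro!: summable_add summable_mult)
  have "(cmod (a * x k + b * y k))\<^sup>2 \<le> 2 * (cmod a)\<^sup>2 * (cmod (x k))\<^sup>2 + 2 * (cmod b)\<^sup>2 * (cmod (y k))\<^sup>2" for k
  proof -
    have "cmod (a * x k + b * y k) \<le> cmod a * cmod (x k) + cmod b * cmod (y k)"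
      by (metis norm_mult norm_triangle_ineq)
    hence "(cmod (a * x k + b * y k))\<^sup>2 \<le> (cmod a * cmod (x k) + cmod b * cmod (y k))\<^sup>2"
      by (simp add: power_mono)
    also have "\<dots> \<le> 2 * (cmod a)\<^sup>2 * (cmod (x k))\<^sup>2 + 2 * (cmod b)\<^sup>2 * (cmod (y k))\<^sup>2"
      using sq_sum_le[of "cmod a * cmod (x k)" "cmod b * cmod (y k)"] by (simp add: power_mult_distrib)
    finally show ?thesis .
  qed
  then show ?thesis unfolding l2_def mem_Collect_eq
    by (intro summable_comparison_test'[OF s]) auto
qed

lemma l2norm_nonneg: "x \<in> l2 \<Longrightarrow> 0 \<le> l2norm x"
  unfolding l2norm_def l2_def by (auto intro!: suminf_nonneg)

lemma l2norm_sq: assumes "x \<in> l2" shows "(l2norm x)\<^sup>2 = (\<Sum>k. (cmod (x k))\<^sup>2)"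
proof -
  have "0 \<le> (\<Sum>k. (cmod (x k))\<^sup>2)" using assms by (intro suminf_nonneg) (auto simp: l2_def)
  thus ?thesis unfolding l2norm_def by simp
qed

lemma coord_le: assumes "x \<in> l2" shows "cmod (x m) \<le> l2norm x"
proof -
  have "(cmod (x m))\<^sup>2 \<le> (\<Sum>k. (cmod (x k))\<^sup>2)"
    using sum_le_suminf[of "\<lambda>k. (cmod (x k))\<^sup>2" "{m}"] assms by (auto simp: l2_def)
  then show ?thesis unfolding l2norm_def by (simp add: real_le_rsqrt)
qed

lemma l2norm_basis: "l2norm (\<e> k) = 1"
proof -
  have "(\<Sum>j. (cmod (\<e> k j))\<^sup>2) = (\<Sum>j\<in>{k}. (cmod (\<e> k j))\<^sup>2)"
    by (rule suminf_finite) (auto simp: basis_vec_def)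
  then show ?thesis by (simp add: l2norm_def basis_vec_def)
qed

lemma l2norm_diff_sq:
  assumes "x \<in> l2" "y \<in> l2"
  shows "(l2norm (\<lambda>k. x k - y k))\<^sup>2 \<le> 2 * (l2norm x)\<^sup>2 + 2 * (l2norm y)\<^sup>2"
proof -
  have d: "(\<lambda>k. x k - y k) \<in> l2" using l2_lin[OF assms, of 1 "-1"] by simp
  have "(\<Sum>k. (cmod (x k - y k))\<^sup>2) \<le> (\<Sum>k. 2 * (cmod (x k))\<^sup>2 + 2 * (cmod (y k))\<^sup>2)"
  proof (rule suminf_le)
    fix k
    have "cmod (x k - y k) \<le> cmod (x k) + cmod (y k)" by (rule norm_triangle_ineq4)
    hence "(cmod (x k - y k))\<^sup>2 \<le> (cmod (x k) + cmod (y k))\<^sup>2" by (simp add: power_mono)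
    also have "\<dots> \<le> 2 * (cmod (x k))\<^sup>2 + 2 * (cmod (y k))\<^sup>2"
      by (rule sq_sum_le)
    finally show "(cmod (x k - y k))\<^sup>2 \<le> 2 * (cmod (x k))\<^sup>2 + 2 * (cmod (y k))\<^sup>2" .
  next
    show "summable (\<lambda>k. (cmod (x k - y k))\<^sup>2)" using d by (simp add: l2_def)
    show "summable (\<lambda>k. 2 * (cmod (x k))\<^sup>2 + 2 * (cmod (y k))\<^sup>2)"
      using assms by (auto simp: l2_def intro!: summable_add summable_mult)
  qed
  also have "\<dots> = 2 * (\<Sum>k. (cmod (x k))\<^sup>2) + 2 * (\<Sum>k. (cmod (y k))\<^sup>2)"
    using assms by (simp add: l2_def suminf_add[symmetric] suminf_mult)
  finally show ?thesis using l2norm_sq assms d by simp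
qed

definition mk_op :: "(nat \<Rightarrow> nat \<Rightarrow> nat \<Rightarrow> complex) \<Rightarrow> op" where
  "mk_op B = (\<lambda>x m. if x \<in> l2 then B (m div 2) (m mod 2) 0 * x (2*(m div 2))
      + B (m div 2) (m mod 2) 1 * x (2*(m div 2)+1) else 0)"

definition bnd :: "(nat \<Rightarrow> nat \<Rightarrow> nat \<Rightarrow> complex) \<Rightarrow> real \<Rightarrow> bool" where
  "bnd B K \<longleftrightarrow> (\<forall>n i j. i < 2 \<longrightarrow> j < 2 \<longrightarrow> cmod (B n i j) \<le> K)"

definition ent :: "op \<Rightarrow> nat \<Rightarrow> nat \<Rightarrow> nat \<Rightarrow> complex" where
  "ent T n i j = T (\<e> (2*n+j)) (2*n+i)"

lemma less2_cases: "(i::nat) < 2 \<Longrightarrow> i = 0 \<or> i = 1" by auto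

lemma bndD: "bnd B K \<Longrightarrow> i < 2 \<Longrightarrow> j < 2 \<Longrightarrow> cmod (B n i j) \<le> K"
  by (simp add: bnd_def)

lemma bnd_nonneg: "bnd B K \<Longrightarrow> 0 \<le> K"
  using bndD[of B K 0 0 0] by (meson norm_ge_zero order_trans zero_less_numeral)

lemma sum_pairs: "(\<Sum>m<2*(n::nat). f m) = (\<Sum>b<n. f (2*b) + f (2*b+1))"
proof (induction n)
  case (Suc n)
  have "2 * Suc n = Suc (Suc (2*n))" by simp
  then show ?case using Suc by (simp add: add.assoc)
qed simp

lemma mk_op_l2_aux:
  assumes B: "bnd B K" and x: "x \<in> l2"
  shows "summable (\<lambda>m. (cmod (mk_op B x m))\<^sup>2) \<and>
         (\<Sum>m. (cmod (mk_op B x m))\<^sup>2) \<le> 4 * K\<^sup>2 * (\<Sum>m. (cmod (x m))\<^sup>2)"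
proof -
  define f where "f m = (cmod (mk_op B x m))\<^sup>2" for m
  define g where "g m = (cmod (x m))\<^sup>2" for m
  have K0: "0 \<le> K" using bnd_nonneg[OF B] .
  have g0: "0 \<le> g m" for m by (simp add: g_def)
  have f0: "0 \<le> f m" for m by (simp add: f_def)
  have sg: "summable g" using x by (simp add: l2_def g_def[abs_def])
  have fm: "f m \<le> 2 * K\<^sup>2 * (g (2*(m div 2)) + g (2*(m div 2)+1))" for m
  proof -
    let ?b = "m div 2"
    have eq: "mk_op B x m = B ?b (m mod 2) 0 * x (2*?b) + B ?b (m mod 2) 1 * x (2*?b+1)"
      using x by (simp add: mk_op_def)
    have "cmod (mk_op B x m) \<le> cmod (B ?b (m mod 2) 0) * cmod (x (2*?b)) + cmod (B ?b (m mod 2) 1) * cmod (x (2*?b+1))"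
      unfolding eq norm_mult[symmetric] by (rule norm_triangle_ineq)
    also have "\<dots> \<le> K * cmod (x (2*?b)) + K * cmod (x (2*?b+1))"
      by (intro add_mono mult_right_mono bndD[OF B]) auto
    finally have "cmod (mk_op B x m) \<le> K * cmod (x (2*?b)) + K * cmod (x (2*?b+1))" .
    hence "f m \<le> (K * cmod (x (2*?b)) + K * cmod (x (2*?b+1)))\<^sup>2"
      unfolding f_def by (simp add: power_mono)
    also have "\<dots> \<le> 2 * (K * cmod (x (2*?b)))\<^sup>2 + 2 * (K * cmod (x (2*?b+1)))\<^sup>2" by (rule sq_sum_le)
    also have "\<dots> = 2 * K\<^sup>2 * (g (2*?b) + g (2*?b+1))"
      unfolding g_def power_mult_distrib by (simp add: ring_distribs)
    finally show ?thesis .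
  qed
  have blk: "f (2*b) + f (2*b+1) \<le> 4 * K\<^sup>2 * (g (2*b) + g (2*b+1))" for b
    using fm[of "2*b"] fm[of "2*b+1"] by simp
  have ps: "(\<Sum>m<n. f m) \<le> 4 * K\<^sup>2 * suminf g" for n
  proof -
    have "(\<Sum>m<n. f m) \<le> (\<Sum>m<2*n. f m)" by (intro sum_mono2) (auto simp: f0)
    also have "\<dots> = (\<Sum>b<n. f (2*b) + f (2*b+1))" by (rule sum_pairs)
    also have "\<dots> \<le> (\<Sum>b<n. 4 * K\<^sup>2 * (g (2*b) + g (2*b+1)))" by (intro sum_mono blk)
    also have "\<dots> = 4 * K\<^sup>2 * (\<Sum>m<2*n. g m)" by (simp add: sum_pairs sum_distrib_left)
    also have "\<dots> \<le> 4 * K\<^sup>2 * suminf g"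
      by (intro mult_left_mono sum_le_suminf[OF sg]) (auto simp: g0)
    finally show ?thesis .
  qed
  have sf: "summable f" by (rule summableI_nonneg_bounded[OF f0 ps])
  have "suminf f \<le> 4 * K\<^sup>2 * suminf g" by (rule suminf_le_const[OF sf ps])
  with sf show ?thesis by (simp add: f_def[abs_def] g_def[abs_def])
qed

lemma mk_op_l2: "bnd B K \<Longrightarrow> x \<in> l2 \<Longrightarrow> mk_op B x \<in> l2"
  using mk_op_l2_aux by (simp add: l2_def)

lemma mk_op_notl2: "x \<notin> l2 \<Longrightarrow> mk_op B x = (\<lambda>k. 0)"
  by (simp add: mk_op_def)

lemma mk_op_l2' : "bnd B K \<Longrightarrow> mk_op B x \<in> l2"
  by (cases "x \<in> l2") (auto simp: mk_op_l2 mk_op_notl2)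

lemma mk_op_norm:
  assumes B: "bnd B K" and x: "x \<in> l2"
  shows "l2norm (mk_op B x) \<le> 2 * K * l2norm x"
proof -
  have K0: "0 \<le> K" using bnd_nonneg[OF B] .
  have a: "(\<Sum>m. (cmod (mk_op B x m))\<^sup>2) \<le> 4 * K\<^sup>2 * (\<Sum>m. (cmod (x m))\<^sup>2)"
    using mk_op_l2_aux[OF B x] by blast
  have "(l2norm (mk_op B x))\<^sup>2 \<le> 4 * K\<^sup>2 * (l2norm x)\<^sup>2"
    unfolding l2norm_sq[OF x] l2norm_sq[OF mk_op_l2[OF B x]] by (rule a)
  also have "\<dots> = (2 * K * l2norm x)\<^sup>2" by (simp add: power_mult_distrib)
  finally have "(l2norm (mk_op B x))\<^sup>2 \<le> (2 * K * l2norm x)\<^sup>2" .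
  moreover have "0 \<le> 2 * K * l2norm x" using K0 l2norm_nonneg[OF x] by simp
  ultimately show ?thesis by (rule power2_le_imp_le)
qed

lemma mk_op_lin:
  assumes "x \<in> l2" "y \<in> l2"
  shows "mk_op B (\<lambda>k. a * x k + b * y k) = (\<lambda>k. a * mk_op B x k + b * mk_op B y k)"
proof
  fix m
  have l: "(\<lambda>k. a * x k + b * y k) \<in> l2" by (rule l2_lin[OF assms])
  show "mk_op B (\<lambda>k. a * x k + b * y k) m = a * mk_op B x m + b * mk_op B y m"
    unfolding mk_op_def using assms l by (simp add: ring_distribs)
qed

lemma mk_op_bounded: assumes B: "bnd B K" shows "mk_op B \<in> bounded_ops"
  unfolding bounded_ops_def
proof (intro CollectI conjI ballI allI impI)
  show "\<And>x. x \<in> l2 \<Longrightarrow> mk_op B x \<in> l2" using mk_op_l2[OF B] .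
  show "\<And>x y a b. x \<in> l2 \<Longrightarrow> y \<in> l2 \<Longrightarrow> mk_op B (\<lambda>k. a * x k + b * y k) = (\<lambda>k. a * mk_op B x k + b * mk_op B y k)"
    by (rule mk_op_lin)
  show "\<exists>C. \<forall>x\<in>l2. l2norm (mk_op B x) \<le> C * l2norm x"
    using mk_op_norm[OF B] by blast
  show "\<And>x. x \<notin> l2 \<Longrightarrow> mk_op B x = (\<lambda>k. 0)" by (rule mk_op_notl2)
qed

lemma mk_op_basis:
  "mk_op B (\<e> k) m = (if k div 2 = m div 2 then B (m div 2) (m mod 2) (k mod 2) else 0)"
proof -
  have e: "mk_op B (\<e> k) m = B (m div 2) (m mod 2) 0 * \<e> k (2*(m div 2))
      + B (m div 2) (m mod 2) 1 * \<e> k (2*(m div 2)+1)" by (simp add: mk_op_def)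
  consider "k = 2*(m div 2)" | "k = 2*(m div 2)+1" | "k div 2 \<noteq> m div 2" by linarith
  then show ?thesis
  proof cases
    case 1 then show ?thesis by (subst e) (simp add: basis_vec_def)
  next
    case 2 then show ?thesis by (subst e) (simp add: basis_vec_def)
  next
    case 3
    hence "k \<noteq> 2*(m div 2)" "k \<noteq> 2*(m div 2)+1" by auto
    with 3 show ?thesis by (subst e) (simp add: basis_vec_def)
  qed
qed

lemma ent_mk_op: "i < 2 \<Longrightarrow> j < 2 \<Longrightarrow> ent (mk_op B) n i j = B n i j"
  unfolding ent_def mk_op_basis by auto

lemma mk_op_A0: assumes "bnd B K" shows "mk_op B \<in> A0"
  unfolding A0_def
proof (intro CollectI conjI allI impI)
  show "mk_op B \<in> bounded_ops" by (rule mk_op_bounded[OF assms])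
  fix k m :: nat assume "mk_op B (\<e> k) m \<noteq> 0"
  hence "k div 2 = m div 2" unfolding mk_op_basis by (auto split: if_splits)
  then show "\<exists>n. {k, m} \<subseteq> {2*n, 2*n+1}"
    by (intro exI[of _ "m div 2"]) auto
qed

lemma bo_l2: "T \<in> bounded_ops \<Longrightarrow> T x \<in> l2"
  unfolding bounded_ops_def by (cases "x \<in> l2") auto

lemma bo_lin: "T \<in> bounded_ops \<Longrightarrow> x \<in> l2 \<Longrightarrow> y \<in> l2 \<Longrightarrow>
   T (\<lambda>k. a * x k + b * y k) = (\<lambda>k. a * T x k + b * T y k)"
  unfolding bounded_ops_def by blast

lemma bo_bound: "T \<in> bounded_ops \<Longrightarrow> \<exists>C. \<forall>x\<in>l2. l2norm (T x) \<le> C * l2norm x"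
  unfolding bounded_ops_def by blast

lemma bo_zero: assumes "T \<in> bounded_ops" shows "T (\<lambda>k. 0) = (\<lambda>k. 0)"
  using bo_lin[OF assms l2_zero l2_zero, of 0 0] by simp

definition trunc :: "nat \<Rightarrow> (nat \<Rightarrow> complex) \<Rightarrow> nat \<Rightarrow> complex" where
  "trunc N x = (\<lambda>k. if k < N then x k else 0)"

lemma trunc_l2: "trunc N x \<in> l2"
  by (rule l2_finsupp[of N]) (simp add: trunc_def)

lemma T_trunc: assumes T: "T \<in> bounded_ops"
  shows "T (trunc N x) = (\<lambda>m. \<Sum>k<N. x k * T (\<e> k) m)"
proof (induction N)
  case 0
  have "trunc 0 x = (\<lambda>k. 0)" by (simp add: trunc_def)
  then show ?case using bo_zero[OF T] by simp
next
  case (Suc N)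
  have "trunc (Suc N) x = (\<lambda>k. 1 * trunc N x k + x N * \<e> N k)"
    by (auto simp: trunc_def basis_vec_def fun_eq_iff less_Suc_eq)
  then have "T (trunc (Suc N) x) = (\<lambda>k. 1 * T (trunc N x) k + x N * T (\<e> N) k)"
    using bo_lin[OF T trunc_l2 basis_l2, of 1 N x "x N" N] by simp
  then show ?case using Suc by simp
qed

lemma tail_small:
  assumes x: "x \<in> l2" and e: "e > 0"
  shows "\<exists>N0. \<forall>N\<ge>N0. (l2norm (\<lambda>k. x k - trunc N x k))\<^sup>2 < e"
proof -
  define g where "g k = (cmod (x k))\<^sup>2" for k
  have sg: "summable g" using x by (simp add: l2_def g_def[abs_def])
  have lim: "(\<lambda>N. \<Sum>k<N. g k) \<longlonglongrightarrow> suminf g" using summable_LIMSEQ[OF sg] .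
  then obtain N0 where N0: "\<forall>N\<ge>N0. dist (\<Sum>k<N. g k) (suminf g) < e"
    using e by (meson LIMSEQ_def)
  show ?thesis
  proof (intro exI allI impI)
    fix N assume "N \<ge> N0"
    with N0 have d: "dist (\<Sum>k<N. g k) (suminf g) < e" by blast
    have dl: "(\<lambda>k. x k - trunc N x k) \<in> l2" using l2_lin[OF x trunc_l2, of 1 "-1" N x] by simp
    have eq: "(\<lambda>k. (cmod (x k - trunc N x k))\<^sup>2) = (\<lambda>k. g k - (if k < N then g k else 0))"
      by (auto simp: trunc_def g_def)
    have "(\<Sum>k. g k - (if k < N then g k else 0)) = suminf g - (\<Sum>k. if k < N then g k else 0)"
      by (rule suminf_diff[symmetric, OF sg]) (rule summable_finite[of "{..<N}"], auto)
    also have "(\<Sum>k. if k < N then g k else 0) = (\<Sum>k\<in>{..<N}. if k < N then g k else 0)"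
      by (rule suminf_finite) auto
    also have "\<dots> = (\<Sum>k<N. g k)" by simp
    finally have "(l2norm (\<lambda>k. x k - trunc N x k))\<^sup>2 = suminf g - (\<Sum>k<N. g k)"
      using l2norm_sq[OF dl] eq by simp
    then show "(l2norm (\<lambda>k. x k - trunc N x k))\<^sup>2 < e" using d by (simp add: dist_real_def)
  qed
qed

lemma eq_if_close: assumes "\<And>e. e > 0 \<Longrightarrow> cmod (a - b) < e" shows "(a::complex) = b"
  using assms[of "cmod (a - b)"] by auto

lemma A0_rep_pt:
  assumes T: "T \<in> A0" and x: "x \<in> l2"
  shows "T x m = x (2*(m div 2)) * T (\<e> (2*(m div 2))) m + x (2*(m div 2)+1) * T (\<e> (2*(m div 2)+1)) m"
proof (rule eq_if_close)
  fix e :: real assume e: "e > 0"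
  let ?b = "m div 2"
  have Tb: "T \<in> bounded_ops" using T by (simp add: A0_def)
  have blk: "T (\<e> k) m = 0" if "k \<noteq> 2*?b" "k \<noteq> 2*?b+1" for k
  proof (rule ccontr)
    assume "T (\<e> k) m \<noteq> 0"
    then obtain n where "{k, m} \<subseteq> {2*n, 2*n+1}" using T by (auto simp: A0_def)
    then show False using that by auto
  qed
  obtain C where C: "\<forall>x\<in>l2. l2norm (T x) \<le> C * l2norm x" using bo_bound[OF Tb] by blast
  define C' where "C' = max C 1"
  have C'pos: "C' > 0" by (simp add: C'_def)
  obtain N0 where N0: "\<forall>N\<ge>N0. (l2norm (\<lambda>k. x k - trunc N x k))\<^sup>2 < (e / C')\<^sup>2"
    using tail_small[OF x, of "(e/C')\<^sup>2"] e C'pos by auto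
  define N where "N = max N0 (2*?b+2)"
  have tN: "(l2norm (\<lambda>k. x k - trunc N x k))\<^sup>2 < (e / C')\<^sup>2" using N0 by (simp add: N_def)
  have dl: "(\<lambda>k. x k - trunc N x k) \<in> l2" using l2_lin[OF x trunc_l2, of 1 "-1" N x] by simp
  have tn: "l2norm (\<lambda>k. x k - trunc N x k) < e / C'"
    using power_less_imp_less_base[OF tN] e C'pos by simp
  have Tdiff: "T (\<lambda>k. x k - trunc N x k) = (\<lambda>k. T x k - T (trunc N x) k)"
    using bo_lin[OF Tb x trunc_l2, of 1 "-1" N x] by simp
  have sumeq: "(\<Sum>k<N. x k * T (\<e> k) m) = (\<Sum>k\<in>{2*?b, 2*?b+1}. x k * T (\<e> k) m)"
    by (rule sum.mono_neutral_right) (auto simp: N_def blk)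
  have TN: "T (trunc N x) m = x (2*?b) * T (\<e> (2*?b)) m + x (2*?b+1) * T (\<e> (2*?b+1)) m"
    unfolding T_trunc[OF Tb] sumeq by simp
  have "cmod (T x m - T (trunc N x) m) = cmod (T (\<lambda>k. x k - trunc N x k) m)" by (simp add: Tdiff)
  also have "\<dots> \<le> l2norm (T (\<lambda>k. x k - trunc N x k))" by (rule coord_le[OF bo_l2[OF Tb]])
  also have "\<dots> \<le> C * l2norm (\<lambda>k. x k - trunc N x k)" using C dl by blast
  also have "\<dots> \<le> C' * l2norm (\<lambda>k. x k - trunc N x k)"
    by (intro mult_right_mono l2norm_nonneg[OF dl]) (simp add: C'_def)
  also have "\<dots> < C' * (e / C')" by (intro mult_strict_left_mono tn C'pos)
  also have "\<dots> = e" using C'pos by simp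
  finally show "cmod (T x m - (x (2*?b) * T (\<e> (2*?b)) m + x (2*?b+1) * T (\<e> (2*?b+1)) m)) < e"
    unfolding TN .
qed

lemma A0_rep: assumes T: "T \<in> A0" shows "T = mk_op (ent T)"
proof (intro ext)
  fix x m
  have Tb: "T \<in> bounded_ops" using T by (simp add: A0_def)
  show "T x m = mk_op (ent T) x m"
  proof (cases "x \<in> l2")
    case True
    have m: "2 * (m div 2) + m mod 2 = m" by simp
    show ?thesis using A0_rep_pt[OF T True, of m] True
      unfolding mk_op_def ent_def m by (simp add: mult.commute)
  next
    case False
    then show ?thesis using Tb by (simp add: bounded_ops_def mk_op_def)
  qed
qed

lemma A0_bnd: assumes T: "T \<in> bounded_ops" shows "\<exists>K. bnd (ent T) K"
proof -
  obtain C where C: "\<forall>x\<in>l2. l2norm (T x) \<le> C * l2norm x" using bo_bound[OF T] by blast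
  have "cmod (T (\<e> k) m) \<le> C" for k m
    using coord_le[OF bo_l2[OF T], of "\<e> k" m] C[rule_format, OF basis_l2[of k]] l2norm_basis[of k] by simp
  then show ?thesis unfolding bnd_def ent_def by blast
qed

definition madd :: "(nat \<Rightarrow> nat \<Rightarrow> nat \<Rightarrow> complex) \<Rightarrow> (nat \<Rightarrow> nat \<Rightarrow> nat \<Rightarrow> complex) \<Rightarrow> nat \<Rightarrow> nat \<Rightarrow> nat \<Rightarrow> complex" where
  "madd B C = (\<lambda>n i j. B n i j + C n i j)"
definition msub :: "(nat \<Rightarrow> nat \<Rightarrow> nat \<Rightarrow> complex) \<Rightarrow> (nat \<Rightarrow> nat \<Rightarrow> nat \<Rightarrow> complex) \<Rightarrow> nat \<Rightarrow> nat \<Rightarrow> nat \<Rightarrow> complex" where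
  "msub B C = (\<lambda>n i j. B n i j - C n i j)"
definition msc :: "complex \<Rightarrow> (nat \<Rightarrow> nat \<Rightarrow> nat \<Rightarrow> complex) \<Rightarrow> nat \<Rightarrow> nat \<Rightarrow> nat \<Rightarrow> complex" where
  "msc c B = (\<lambda>n i j. c * B n i j)"
definition mprod :: "(nat \<Rightarrow> nat \<Rightarrow> nat \<Rightarrow> complex) \<Rightarrow> (nat \<Rightarrow> nat \<Rightarrow> nat \<Rightarrow> complex) \<Rightarrow> nat \<Rightarrow> nat \<Rightarrow> nat \<Rightarrow> complex" where
  "mprod B C = (\<lambda>n i j. B n i 0 * C n 0 j + B n i 1 * C n 1 j)"
definition madj :: "(nat \<Rightarrow> nat \<Rightarrow> nat \<Rightarrow> complex) \<Rightarrow> nat \<Rightarrow> nat \<Rightarrow> nat \<Rightarrow> complex" where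
  "madj B = (\<lambda>n i j. cnj (B n j i))"

lemma op_add_mk: "op_add (mk_op B) (mk_op C) = mk_op (madd B C)"
  by (auto simp: op_add_def mk_op_def madd_def fun_eq_iff ring_distribs)

lemma op_diff_mk: "op_diff (mk_op B) (mk_op C) = mk_op (msub B C)"
  by (auto simp: op_diff_def mk_op_def msub_def fun_eq_iff left_diff_distrib)

lemma op_scale_mk: "op_scale c (mk_op B) = mk_op (msc c B)"
  by (auto simp: op_scale_def mk_op_def msc_def fun_eq_iff ring_distribs)

lemma bnd_mono: "bnd B K \<Longrightarrow> K \<le> L \<Longrightarrow> bnd B L"
  by (auto simp: bnd_def intro: order_trans)

lemma bnd_add: "bnd B K \<Longrightarrow> bnd C L \<Longrightarrow> bnd (madd B C) (K + L)"
  unfolding bnd_def madd_def by (meson add_mono norm_triangle_le)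

lemma bnd_sub: "bnd B K \<Longrightarrow> bnd C L \<Longrightarrow> bnd (msub B C) (K + L)"
  unfolding bnd_def msub_def by (meson add_mono norm_triangle_le_diff)

lemma bnd_sc: "bnd B K \<Longrightarrow> bnd (msc c B) (cmod c * K)"
  unfolding bnd_def msc_def by (simp add: norm_mult mult_left_mono)

lemma bnd_adj: "bnd B K \<Longrightarrow> bnd (madj B) K"
  unfolding bnd_def madj_def by simp

lemma bnd_prod: assumes B: "bnd B K" and C: "bnd C L" shows "bnd (mprod B C) (2 * K * L)"
  unfolding bnd_def mprod_def
proof (intro allI impI)
  fix n i j :: nat assume i: "i < 2" and j: "j < 2"
  have K0: "0 \<le> K" using bnd_nonneg[OF B] .
  have "cmod (B n i 0 * C n 0 j + B n i 1 * C n 1 j) \<le> cmod (B n i 0) * cmod (C n 0 j) + cmod (B n i 1) * cmod (C n 1 j)"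
    unfolding norm_mult[symmetric] by (rule norm_triangle_ineq)
  also have "\<dots> \<le> K * L + K * L"
    by (intro add_mono mult_mono bndD[OF B] bndD[OF C] i j K0) auto
  finally show "cmod (B n i 0 * C n 0 j + B n i 1 * C n 1 j) \<le> 2 * K * L" by simp
qed

lemma mk_op_comp: assumes C: "bnd C L" shows "mk_op B \<circ> mk_op C = mk_op (mprod B C)"
proof (intro ext)
  fix x m
  show "(mk_op B \<circ> mk_op C) x m = mk_op (mprod B C) x m"
  proof (cases "x \<in> l2")
    case True
    have l: "mk_op C x \<in> l2" using mk_op_l2[OF C True] .
    have a: "mk_op C x (2 * (m div 2)) = C (m div 2) 0 0 * x (2*(m div 2)) + C (m div 2) 0 1 * x (2*(m div 2)+1)"
      using True by (simp add: mk_op_def)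
    have b: "mk_op C x (2 * (m div 2) + 1) = C (m div 2) 1 0 * x (2*(m div 2)) + C (m div 2) 1 1 * x (2*(m div 2)+1)"
      using True by (simp add: mk_op_def)
    show ?thesis using True l
      by (simp only: comp_def mk_op_def if_True a b mprod_def) (simp add: ring_distribs)
  next
    case False
    then show ?thesis by (simp add: mk_op_def)
  qed
qed

lemma inner_summable:
  assumes "u \<in> l2" "v \<in> l2" shows "summable (\<lambda>k. u k * cnj (v k))"
proof (rule summable_norm_cancel)
  have s: "summable (\<lambda>k. (cmod (u k))\<^sup>2 + (cmod (v k))\<^sup>2)"
    using assms by (auto simp: l2_def intro!: summable_add)
  show "summable (\<lambda>k. norm (u k * cnj (v k)))"
  proof (rule summable_comparison_test'[OF s])
    fix k
    have "0 \<le> (cmod (u k) - cmod (v k))\<^sup>2" by simp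
    hence "cmod (u k) * cmod (v k) \<le> (cmod (u k))\<^sup>2 + (cmod (v k))\<^sup>2"
      by (simp add: power2_eq_square algebra_simps) (smt (verit) mult_nonneg_nonneg norm_ge_zero)
    then show "norm (norm (u k * cnj (v k))) \<le> (cmod (u k))\<^sup>2 + (cmod (v k))\<^sup>2"
      by (simp add: norm_mult)
  qed
qed

lemma inner_group:
  assumes "u \<in> l2" "v \<in> l2"
  shows "l2inner u v = (\<Sum>n. u (2*n) * cnj (v (2*n)) + u (2*n+1) * cnj (v (2*n+1)))"
proof -
  have "(\<lambda>n. sum (\<lambda>k. u k * cnj (v k)) {n*2..<n*2+2}) sums l2inner u v"
    unfolding l2inner_def by (rule sums_group[OF summable_sums[OF inner_summable[OF assms]]]) simp
  moreover have "sum (\<lambda>k. u k * cnj (v k)) {n*2..<n*2+2} = u (2*n) * cnj (v (2*n)) + u (2*n+1) * cnj (v (2*n+1))" for n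
  proof -
    have "{n*2..<n*2+2} = {2*n, 2*n+1}" by auto
    then show ?thesis by simp
  qed
  ultimately show ?thesis by (simp add: sums_unique)
qed

lemma inner_basis: assumes "z \<in> l2" shows "l2inner (\<e> k) z = cnj (z k)"
proof -
  have "l2inner (\<e> k) z = (\<Sum>j\<in>{k}. \<e> k j * cnj (z j))"
    unfolding l2inner_def by (rule suminf_finite) (auto simp: basis_vec_def)
  then show ?thesis by (simp add: basis_vec_def)
qed

lemma mk_op_inner:
  assumes B: "bnd B K" and x: "x \<in> l2" and y: "y \<in> l2"
  shows "l2inner (mk_op B x) y = l2inner x (mk_op (madj B) y)"
proof -
  have l1: "mk_op B x \<in> l2" using mk_op_l2[OF B x] .
  have l2: "mk_op (madj B) y \<in> l2" using mk_op_l2[OF bnd_adj[OF B] y] .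
  have d1: "(2*n+1) div 2 = n" "(2*n+1) mod 2 = 1" "(2*n) div 2 = n" "(2*n) mod 2 = 0" for n::nat by auto
  have "mk_op B x (2*n) * cnj (y (2*n)) + mk_op B x (2*n+1) * cnj (y (2*n+1))
      = x (2*n) * cnj (mk_op (madj B) y (2*n)) + x (2*n+1) * cnj (mk_op (madj B) y (2*n+1))" for n
    using x y unfolding mk_op_def madj_def d1 by (simp add: ring_distribs algebra_simps)
  then show ?thesis
    unfolding inner_group[OF l1 y] inner_group[OF x l2] by simp
qed

lemma mk_op_adj: assumes B: "bnd B K" shows "adj (mk_op B) = mk_op (madj B)"
proof (rule ext)
  fix y
  show "adj (mk_op B) y = mk_op (madj B) y"
  proof (cases "y \<in> l2")
    case True
    have P: "mk_op (madj B) y \<in> l2 \<and> (\<forall>x\<in>l2. l2inner (mk_op B x) y = l2inner x (mk_op (madj B) y))"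
      using mk_op_l2[OF bnd_adj[OF B] True] mk_op_inner[OF B _ True] by blast
    have "(THE z. z \<in> l2 \<and> (\<forall>x\<in>l2. l2inner (mk_op B x) y = l2inner x z)) = mk_op (madj B) y"
    proof (rule the_equality)
      show "mk_op (madj B) y \<in> l2 \<and> (\<forall>x\<in>l2. l2inner (mk_op B x) y = l2inner x (mk_op (madj B) y))" by (rule P)
    next
      fix z assume z: "z \<in> l2 \<and> (\<forall>x\<in>l2. l2inner (mk_op B x) y = l2inner x z)"
      show "z = mk_op (madj B) y"
      proof
        fix k
        have "l2inner (\<e> k) z = l2inner (\<e> k) (mk_op (madj B) y)" using z P basis_l2[of k] by metis
        then have "cnj (z k) = cnj (mk_op (madj B) y k)"
          using inner_basis z P by metis
        then show "z k = mk_op (madj B) y k" by simp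
      qed
    qed
    then show ?thesis using True by (simp add: adj_def)
  next
    case False
    then show ?thesis by (simp add: adj_def mk_op_def)
  qed
qed

definition opset :: "op \<Rightarrow> real set" where
  "opset T = {l2norm (T x) | x. x \<in> l2 \<and> l2norm x \<le> 1}"

lemma opnorm_opset: "opnorm T = Sup (opset T)" by (simp add: opnorm_def opset_def)

lemma opnorm_lower:
  assumes M: "\<And>x. x \<in> l2 \<Longrightarrow> l2norm x \<le> 1 \<Longrightarrow> l2norm (T x) \<le> M"
    and l: "T (\<e> k) \<in> l2"
  shows "cmod (T (\<e> k) m) \<le> opnorm T"
proof -
  have bdd: "bdd_above (opset T)" unfolding opset_def bdd_above_def using M by blast
  have "l2norm (T (\<e> k)) \<in> opset T" unfolding opset_def using l2norm_basis[of k] by force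
  then have "l2norm (T (\<e> k)) \<le> opnorm T" unfolding opnorm_opset by (rule cSup_upper[OF _ bdd])
  then show ?thesis using coord_le[OF l, of m] by linarith
qed

lemma opnorm_upper:
  assumes B: "bnd B K" shows "opnorm (mk_op B) \<le> 2 * K"
proof -
  have ne: "opset (mk_op B) \<noteq> {}" unfolding opset_def
    using l2_zero by (auto intro!: exI[of _ "\<lambda>k. 0"] simp: l2norm_def)
  have "s \<le> 2 * K" if s: "s \<in> opset (mk_op B)" for s
  proof -
    obtain x where x: "x \<in> l2" "l2norm x \<le> 1" "s = l2norm (mk_op B x)"
      using s unfolding opset_def by auto
    have "s \<le> 2 * K * l2norm x" using mk_op_norm[OF B x(1)] x(3) by simp
    also have "\<dots> \<le> 2 * K * 1" using x(2) bnd_nonneg[OF B] by (intro mult_left_mono) auto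
    finally show ?thesis by simp
  qed
  then show ?thesis unfolding opnorm_opset by (rule cSup_least[OF ne])
qed

lemma bo_unit_bound: assumes T: "T \<in> bounded_ops"
  shows "\<exists>M. \<forall>x. x \<in> l2 \<longrightarrow> l2norm x \<le> 1 \<longrightarrow> l2norm (T x) \<le> M"
proof -
  obtain C where C: "\<forall>x\<in>l2. l2norm (T x) \<le> C * l2norm x" using bo_bound[OF T] by blast
  have "l2norm (T x) \<le> \<bar>C\<bar>" if "x \<in> l2" "l2norm x \<le> 1" for x
  proof -
    have "l2norm (T x) \<le> C * l2norm x" using C that by blast
    also have "\<dots> \<le> \<bar>C\<bar> * l2norm x" using l2norm_nonneg[OF that(1)] by (intro mult_right_mono) auto
    also have "\<dots> \<le> \<bar>C\<bar> * 1" using that by (intro mult_left_mono) auto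
    finally show ?thesis by simp
  qed
  then show ?thesis by blast
qed

lemma le_sq1: "(t::real) \<le> t\<^sup>2 + 1"
proof -
  have "0 \<le> (t - 1)\<^sup>2" by simp
  hence "2 * t \<le> t\<^sup>2 + 1" by (simp add: power2_eq_square algebra_simps)
  moreover have "0 \<le> t\<^sup>2" by simp
  ultimately show ?thesis by linarith
qed

lemma opnorm_diff_lower:
  assumes T: "T \<in> bounded_ops" and S: "S \<in> bounded_ops"
  shows "cmod (T (\<e> k) m - S (\<e> k) m) \<le> opnorm (op_diff T S)"
proof -
  obtain M1 where M1: "\<forall>x. x \<in> l2 \<longrightarrow> l2norm x \<le> 1 \<longrightarrow> l2norm (T x) \<le> M1" using bo_unit_bound[OF T] by blast
  obtain M2 where M2: "\<forall>x. x \<in> l2 \<longrightarrow> l2norm x \<le> 1 \<longrightarrow> l2norm (S x) \<le> M2" using bo_unit_bound[OF S] by blast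
  have "l2norm (op_diff T S x) \<le> 2 * M1\<^sup>2 + 2 * M2\<^sup>2 + 1" if x: "x \<in> l2" "l2norm x \<le> 1" for x
  proof -
    have a: "(l2norm (\<lambda>k. T x k - S x k))\<^sup>2 \<le> 2 * (l2norm (T x))\<^sup>2 + 2 * (l2norm (S x))\<^sup>2"
      by (rule l2norm_diff_sq[OF bo_l2[OF T] bo_l2[OF S]])
    have "(l2norm (T x))\<^sup>2 \<le> M1\<^sup>2"
      using M1 x l2norm_nonneg[OF bo_l2[OF T]] by (intro power_mono) auto
    moreover have "(l2norm (S x))\<^sup>2 \<le> M2\<^sup>2"
      using M2 x l2norm_nonneg[OF bo_l2[OF S]] by (intro power_mono) auto
    moreover have "l2norm (\<lambda>k. T x k - S x k) \<le> (l2norm (\<lambda>k. T x k - S x k))\<^sup>2 + 1"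
      by (rule le_sq1)
    ultimately show ?thesis using a unfolding op_diff_def by linarith
  qed
  moreover have "op_diff T S (\<e> k) \<in> l2"
    unfolding op_diff_def using l2_lin[OF bo_l2[OF T] bo_l2[OF S], of 1 "\<e> k" "-1" "\<e> k"] by simp
  ultimately have "cmod (op_diff T S (\<e> k) m) \<le> opnorm (op_diff T S)"
    by (intro opnorm_lower) auto
  then show ?thesis by (simp add: op_diff_def)
qed

definition idX :: "nat set \<Rightarrow> nat \<Rightarrow> nat \<Rightarrow> nat \<Rightarrow> complex" where
  "idX X = (\<lambda>n i j. if n \<in> X \<and> i = j then 1 else 0)"

lemma bnd_idX: "bnd (idX X) 1" by (simp add: bnd_def idX_def)

lemma projP_mk: "projP X = mk_op (idX X)"
proof (intro ext)
  fix x :: "nat \<Rightarrow> complex" and m :: nat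
  consider "m mod 2 = 0" | "m mod 2 = 1" by linarith
  then show "projP X x m = mk_op (idX X) x m"
  proof cases
    case 1
    then have "2 * (m div 2) = m" by presburger
    then show ?thesis using 1 by (auto simp: projP_def mk_op_def idX_def)
  next
    case 2
    then have "2 * (m div 2) + 1 = m" by presburger
    then show ?thesis using 2 by (auto simp: projP_def mk_op_def idX_def)
  qed
qed

definition small :: "nat set \<Rightarrow> (nat \<Rightarrow> complex) \<Rightarrow> bool" where
  "small X f \<longleftrightarrow> (\<forall>e>0. finite {n\<in>X. e \<le> cmod (f n)})"

lemma A0_block_zero: assumes "R \<in> A0" "k div 2 \<noteq> m div 2" shows "R (\<e> k) m = 0"
proof (rule ccontr)
  assume "R (\<e> k) m \<noteq> 0"
  then obtain n where "{k, m} \<subseteq> {2*n, 2*n+1}" using assms(1) by (auto simp: A0_def)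
  then show False using assms(2) by auto
qed

lemma pigeon: assumes "infinite S" "finite F" "\<And>n. n \<in> S \<Longrightarrow> g n \<in> F"
  shows "\<exists>a\<in>S. \<exists>b\<in>S. a \<noteq> b \<and> g a = g b"
proof (rule ccontr)
  assume "\<not> ?thesis"
  then have "inj_on g S" by (auto simp: inj_on_def)
  moreover have "finite (g ` S)" using assms by (meson finite_subset image_subsetI)
  ultimately show False using assms(1) finite_imageD by blast
qed

lemma compact_small:
  assumes C: "compact_op R" and A: "R \<in> A0" and i: "i < 2" and j: "j < 2"
  shows "small X (\<lambda>n. ent R n i j)"
proof -
  have Rb: "R \<in> bounded_ops" using A by (simp add: A0_def)
  have "finite {n. e \<le> cmod (ent R n i j)}" if e: "e > 0" for e
  proof (rule ccontr)
    let ?S = "{n. e \<le> cmod (ent R n i j)}"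
    assume inf: "infinite ?S"
    obtain F where F: "finite F" "F \<subseteq> l2"
      "\<forall>x\<in>l2. l2norm x \<le> 1 \<longrightarrow> (\<exists>y\<in>F. l2norm (\<lambda>k. R x k - y k) < e/2)"
      using C e unfolding compact_op_def by (meson half_gt_zero)
    have "\<exists>y\<in>F. l2norm (\<lambda>k. R (\<e> (2*n+j)) k - y k) < e/2" for n
      using F(3) basis_l2 l2norm_basis by simp
    then obtain g where g: "\<And>n. g n \<in> F \<and> l2norm (\<lambda>k. R (\<e> (2*n+j)) k - g n k) < e/2" by metis
    obtain a b where ab: "a \<in> ?S" "b \<in> ?S" "a \<noteq> b" "g a = g b"
      using pigeon[OF inf F(1), of g] g by blast
    let ?y = "g a"
    have yl: "?y \<in> l2" using g F(2) by blast
    have dl: "(\<lambda>k. R (\<e> (2*n+j)) k - ?y k) \<in> l2" for n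
      using l2_lin[OF bo_l2[OF Rb] yl, of 1 "\<e> (2*n+j)" "-1"] by simp
    have c1: "cmod (R (\<e> (2*a+j)) (2*a+i) - ?y (2*a+i)) < e/2"
      using coord_le[OF dl[of a], of "2*a+i"] g[of a] by simp
    have z: "R (\<e> (2*b+j)) (2*a+i) = 0"
      using A0_block_zero[OF A] ab(3) i j by simp
    have c2: "cmod (?y (2*a+i)) < e/2"
      using coord_le[OF dl[of b], of "2*a+i"] g[of b] ab(4) z by simp
    have "e \<le> cmod (R (\<e> (2*a+j)) (2*a+i))" using ab(1) by (simp add: ent_def add.commute)
    also have "\<dots> \<le> cmod (R (\<e> (2*a+j)) (2*a+i) - ?y (2*a+i)) + cmod (?y (2*a+i))"
      using norm_triangle_ineq2[of "R (\<e> (2*a+j)) (2*a+i)" "?y (2*a+i)"] by linarith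
    finally show False using c1 c2 by linarith
  qed
  then show ?thesis unfolding small_def by (auto intro: finite_subset[rotated])
qed

definition rnd :: "real \<Rightarrow> complex \<Rightarrow> complex" where
  "rnd \<eta> z = complex_of_real (of_int \<lfloor>Re z / \<eta>\<rfloor> * \<eta>) + \<i> * complex_of_real (of_int \<lfloor>Im z / \<eta>\<rfloor> * \<eta>)"

definition grid :: "real \<Rightarrow> int \<Rightarrow> complex set" where
  "grid \<eta> L = (\<lambda>(a,b). complex_of_real (of_int a * \<eta>) + \<i> * complex_of_real (of_int b * \<eta>)) ` ({-L..L} \<times> {-L..L})"

lemma grid_finite: "finite (grid \<eta> L)" unfolding grid_def by simp

lemma floor_err: assumes "\<eta> > 0" shows "0 \<le> t - of_int \<lfloor>t / \<eta>\<rfloor> * \<eta> \<and> t - of_int \<lfloor>t / \<eta>\<rfloor> * \<eta> < \<eta>"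
proof -
  have a: "of_int \<lfloor>t / \<eta>\<rfloor> \<le> t / \<eta>" by (rule of_int_floor_le)
  have b: "t / \<eta> < of_int \<lfloor>t / \<eta>\<rfloor> + 1" using floor_correct[of "t / \<eta>"] by simp
  have "of_int \<lfloor>t / \<eta>\<rfloor> * \<eta> \<le> (t / \<eta>) * \<eta>" by (rule mult_right_mono[OF a]) (use assms in simp)
  then have "of_int \<lfloor>t / \<eta>\<rfloor> * \<eta> \<le> t" using assms by simp
  moreover from b have "t < (of_int \<lfloor>t / \<eta>\<rfloor> + 1) * \<eta>" using assms by (simp add: pos_divide_less_eq)
  ultimately show ?thesis by (simp add: algebra_simps)
qed

lemma rnd_err: assumes "\<eta> > 0" shows "(cmod (z - rnd \<eta> z))\<^sup>2 \<le> 2 * \<eta>\<^sup>2"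
proof -
  have r: "Re (z - rnd \<eta> z) = Re z - of_int \<lfloor>Re z / \<eta>\<rfloor> * \<eta>" by (simp add: rnd_def)
  have i: "Im (z - rnd \<eta> z) = Im z - of_int \<lfloor>Im z / \<eta>\<rfloor> * \<eta>" by (simp add: rnd_def)
  have "(Re (z - rnd \<eta> z))\<^sup>2 \<le> \<eta>\<^sup>2" unfolding r using floor_err[OF assms, of "Re z"]
    by (intro power_mono) auto
  moreover have "(Im (z - rnd \<eta> z))\<^sup>2 \<le> \<eta>\<^sup>2" unfolding i using floor_err[OF assms, of "Im z"]
    by (intro power_mono) auto
  ultimately show ?thesis unfolding cmod_power2 by linarith
qed

lemma floor_range: assumes "\<eta> > 0" "\<bar>t\<bar> \<le> M" "of_int L \<ge> M / \<eta> + 1"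
  shows "\<lfloor>t / \<eta>\<rfloor> \<in> {-L..L}"
proof -
  have "\<bar>t / \<eta>\<bar> \<le> M / \<eta>" using assms by (simp add: abs_divide divide_right_mono)
  then have "- (M/\<eta>) \<le> t / \<eta>" "t / \<eta> \<le> M / \<eta>" by linarith+
  then have a: "of_int (-L) \<le> t / \<eta>" using assms(3) by simp
  have b: "t / \<eta> < of_int L + 1" using assms(3) \<open>t / \<eta> \<le> M / \<eta>\<close> by linarith
  show ?thesis using a b by (simp add: le_floor_iff floor_le_iff)
qed

lemma rnd_grid: assumes "\<eta> > 0" "cmod z \<le> M" "of_int L \<ge> M / \<eta> + 1"
  shows "rnd \<eta> z \<in> grid \<eta> L"
proof -
  have "\<bar>Re z\<bar> \<le> M" using abs_Re_le_cmod[of z] assms(2) by linarith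
  then have "\<lfloor>Re z / \<eta>\<rfloor> \<in> {-L..L}" using floor_range[OF assms(1) _ assms(3)] by blast
  moreover have "\<bar>Im z\<bar> \<le> M" using abs_Im_le_cmod[of z] assms(2) by linarith
  then have "\<lfloor>Im z / \<eta>\<rfloor> \<in> {-L..L}" using floor_range[OF assms(1) _ assms(3)] by blast
  ultimately show ?thesis unfolding grid_def rnd_def by force
qed

lemma small_tail:
  fixes B :: "nat \<Rightarrow> nat \<Rightarrow> nat \<Rightarrow> complex"
  assumes S: "\<forall>i<2. \<forall>j<2. small UNIV (\<lambda>n. B n i j)" and d: "d > 0"
  shows "\<exists>N. \<forall>n\<ge>N. \<forall>i<2. \<forall>j<2. cmod (B n i j) < d"
proof -
  have f: "finite {n. d \<le> cmod (B n i j)}" if "i < 2" "j < 2" for i j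
    using S that d unfolding small_def by auto
  have "{n. \<exists>i<2. \<exists>j<2. d \<le> cmod (B n i j)} = {n. d \<le> cmod (B n 0 0)} \<union> {n. d \<le> cmod (B n 0 1)} \<union> {n. d \<le> cmod (B n 1 0)} \<union> {n. d \<le> cmod (B n 1 1)}"
    by (auto dest!: less2_cases) (metis lessI numeral_2_eq_2 zero_less_Suc)+
  then have "finite {n. \<exists>i<2. \<exists>j<2. d \<le> cmod (B n i j)}" using f by simp
  then obtain N where "{n. \<exists>i<2. \<exists>j<2. d \<le> cmod (B n i j)} \<subseteq> {..<N}" unfolding finite_nat_set_iff_bounded by blast
  then have "\<forall>n\<ge>N. \<forall>i<2. \<forall>j<2. cmod (B n i j) < d"
    by (metis (mono_tags, lifting) lessThan_iff mem_Collect_eq not_le subset_eq)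
  then show ?thesis by blast
qed

lemma small_compact:
  assumes B: "bnd B K" and S: "\<forall>i<2. \<forall>j<2. small UNIV (\<lambda>n. B n i j)"
  shows "compact_op (mk_op B)"
  unfolding compact_op_def
proof (intro conjI allI impI)
  show "mk_op B \<in> bounded_ops" by (rule mk_op_bounded[OF B])
  fix \<epsilon> :: real assume \<epsilon>: "\<epsilon> > 0"
  define d where "d = \<epsilon> / 4"
  have d0: "d > 0" using \<epsilon> by (simp add: d_def)
  obtain N where N: "\<forall>n\<ge>N. \<forall>i<2. \<forall>j<2. cmod (B n i j) < d" using small_tail[OF S d0] by blast
  define Bh where "Bh = (\<lambda>n i j. if n < N then B n i j else 0)"
  define Bt where "Bt = (\<lambda>n i j. if n < N then 0 else B n i j)"
  have K0: "0 \<le> K" using bnd_nonneg[OF B] .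
  have Bh: "bnd Bh K" using B K0 by (simp add: bnd_def Bh_def)
  have Bt: "bnd Bt d" using N d0 by (auto simp: bnd_def Bt_def less_imp_le)
  define \<eta> where "\<eta> = \<epsilon> / (4 * (real N + 1))"
  have \<eta>0: "\<eta> > 0" using \<epsilon> by (simp add: \<eta>_def)
  have \<eta>N: "4 * (real N + 1) * \<eta> = \<epsilon>" by (simp add: \<eta>_def)
  define L :: int where "L = \<lceil>2 * K / \<eta>\<rceil> + 1"
  have L: "of_int L \<ge> 2 * K / \<eta> + 1" unfolding L_def by (simp add: le_of_int_ceiling)
  define F where "F = (\<lambda>l m. if m < 2*N then l ! m else 0) ` {l. set l \<subseteq> grid \<eta> L \<and> length l = 2*N}"
  show "\<exists>F. finite F \<and> F \<subseteq> l2 \<and> (\<forall>x\<in>l2. l2norm x \<le> 1 \<longrightarrow> (\<exists>y\<in>F. l2norm (\<lambda>k. mk_op B x k - y k) < \<epsilon>))"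
  proof (intro exI[of _ F] conjI ballI impI)
    show "finite F" unfolding F_def by (intro finite_imageI finite_lists_length_eq grid_finite)
    show "F \<subseteq> l2" unfolding F_def by (auto intro!: l2_finsupp[of "2*N"])
    fix x assume x: "x \<in> l2" and x1: "l2norm x \<le> 1"
    define w where "w = mk_op Bh x"
    define y where "y = (\<lambda>m. if m < 2*N then rnd \<eta> (w m) else 0)"
    have wl: "w \<in> l2" unfolding w_def by (rule mk_op_l2[OF Bh x])
    have wb: "cmod (w m) \<le> 2 * K" for m
    proof -
      have "cmod (w m) \<le> l2norm w" by (rule coord_le[OF wl])
      also have "\<dots> \<le> 2 * K * l2norm x" unfolding w_def by (rule mk_op_norm[OF Bh x])
      also have "\<dots> \<le> 2 * K * 1" using x1 K0 by (intro mult_left_mono) auto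
      finally show ?thesis by simp
    qed
    have yF: "y \<in> F"
    proof -
      have "map (\<lambda>m. rnd \<eta> (w m)) [0..<2*N] \<in> {l. set l \<subseteq> grid \<eta> L \<and> length l = 2*N}"
        using rnd_grid[OF \<eta>0 wb L] by auto
      moreover have "y = (\<lambda>m. if m < 2*N then map (\<lambda>m. rnd \<eta> (w m)) [0..<2*N] ! m else 0)"
        by (auto simp: y_def fun_eq_iff)
      ultimately show ?thesis unfolding F_def by blast
    qed
    have split: "mk_op B x m = w m + mk_op Bt x m" for m
      using x by (simp add: w_def mk_op_def Bh_def Bt_def ring_distribs)
    have w0: "w m = 0" if "\<not> m < 2*N" for m
    proof -
      have "\<not> m div 2 < N" using that by linarith
      then show ?thesis using x by (simp add: w_def mk_op_def Bh_def)
    qed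
    have t0: "mk_op Bt x m = 0" if "m < 2*N" for m
    proof -
      have "m div 2 < N" using that by linarith
      then show ?thesis using x by (simp add: mk_op_def Bt_def)
    qed
    define a where "a m = (if m < 2*N then (cmod (w m - rnd \<eta> (w m)))\<^sup>2 else 0)" for m
    define b where "b m = (cmod (mk_op Bt x m))\<^sup>2" for m
    have pt: "(cmod (mk_op B x m - y m))\<^sup>2 = a m + b m" for m
      by (cases "m < 2*N") (simp_all add: a_def b_def y_def split t0 w0)
    have sa: "summable a" unfolding a_def by (rule summable_finite[of "{..<2*N}"]) auto
    have tl: "mk_op Bt x \<in> l2" by (rule mk_op_l2[OF Bt x])
    have sb: "summable b" using tl by (simp add: l2_def b_def[abs_def])
    have Dl: "(\<lambda>k. mk_op B x k - y k) \<in> l2" unfolding l2_def using pt sa sb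
      by (simp add: summable_add)
    have suma: "suminf a \<le> 4 * real N * \<eta>\<^sup>2"
    proof -
      have "suminf a = (\<Sum>m\<in>{..<2*N}. a m)" by (rule suminf_finite) (auto simp: a_def)
      also have "\<dots> \<le> (\<Sum>m\<in>{..<2*N}. 2 * \<eta>\<^sup>2)"
        by (intro sum_mono) (simp add: a_def rnd_err[OF \<eta>0])
      also have "\<dots> = 4 * real N * \<eta>\<^sup>2" by simp
      finally show ?thesis .
    qed
    have sumb: "suminf b \<le> 4 * d\<^sup>2"
    proof -
      have "suminf b = (l2norm (mk_op Bt x))\<^sup>2" using l2norm_sq[OF tl] by (simp add: b_def[abs_def])
      also have "\<dots> \<le> (2 * d * l2norm x)\<^sup>2"
        using mk_op_norm[OF Bt x] l2norm_nonneg[OF tl] by (intro power_mono) auto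
      also have "\<dots> \<le> (2 * d * 1)\<^sup>2"
        using x1 l2norm_nonneg[OF x] d0 by (intro power_mono mult_left_mono) auto
      finally show ?thesis by (simp add: power_mult_distrib)
    qed
    have "(l2norm (\<lambda>k. mk_op B x k - y k))\<^sup>2 = suminf a + suminf b"
      unfolding l2norm_sq[OF Dl] pt by (rule suminf_add[OF sa sb, symmetric])
    also have "\<dots> \<le> 4 * real N * \<eta>\<^sup>2 + 4 * d\<^sup>2" using suma sumb by linarith
    also have "\<dots> < \<epsilon>\<^sup>2"
    proof -
      have "4 * real N * \<eta>\<^sup>2 \<le> (4 * (real N + 1) * \<eta>) * \<eta>"
        using \<eta>0 by (simp add: power2_eq_square mult_right_mono)
      also have "\<dots> = \<epsilon> * \<eta>" using \<eta>N by simp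
      also have "\<dots> \<le> \<epsilon> * (\<epsilon> / 4)"
      proof -
        have "4 \<le> 4 * (real N + 1)" by simp
        then have "\<eta> \<le> \<epsilon> / 4" using \<epsilon> unfolding \<eta>_def by (intro divide_left_mono) auto
        then show ?thesis using \<epsilon> by (intro mult_left_mono) auto
      qed
      finally have "4 * real N * \<eta>\<^sup>2 \<le> \<epsilon>\<^sup>2 / 4" by (simp add: power2_eq_square)
      moreover have "4 * d\<^sup>2 = \<epsilon>\<^sup>2 / 4" by (simp add: d_def power2_eq_square)
      moreover have "0 < \<epsilon>\<^sup>2" using \<epsilon> by simp
      ultimately show ?thesis by linarith
    qed
    finally have "(l2norm (\<lambda>k. mk_op B x k - y k))\<^sup>2 < \<epsilon>\<^sup>2" .
    then have "l2norm (\<lambda>k. mk_op B x k - y k) < \<epsilon>"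
      by (rule power_less_imp_less_base) (use \<epsilon> in simp)
    then show "\<exists>y\<in>F. l2norm (\<lambda>k. mk_op B x k - y k) < \<epsilon>" using yF by blast
  qed
qed

lemma small_zero: "small X (\<lambda>n. 0)" by (simp add: small_def)

lemma small_le: assumes "small X g" "\<And>n. n \<in> X \<Longrightarrow> cmod (f n) \<le> cmod (g n)" shows "small X f"
  unfolding small_def
proof (intro allI impI)
  fix e :: real assume "e > 0"
  then have "finite {n\<in>X. e \<le> cmod (g n)}" using assms(1) by (simp add: small_def)
  then show "finite {n\<in>X. e \<le> cmod (f n)}"
    by (rule finite_subset[rotated]) (use assms(2) in force)
qed

lemma small_add: assumes f: "small X f" and g: "small X g" shows "small X (\<lambda>n. f n + g n)"
  unfolding small_def
proof (intro allI impI)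
  fix e :: real assume e: "e > 0"
  have "finite {n\<in>X. e/2 \<le> cmod (f n)}" "finite {n\<in>X. e/2 \<le> cmod (g n)}"
    using f g e unfolding small_def by (meson half_gt_zero)+
  then have "finite ({n\<in>X. e/2 \<le> cmod (f n)} \<union> {n\<in>X. e/2 \<le> cmod (g n)})" by simp
  moreover have "{n\<in>X. e \<le> cmod (f n + g n)} \<subseteq> {n\<in>X. e/2 \<le> cmod (f n)} \<union> {n\<in>X. e/2 \<le> cmod (g n)}"
  proof
    fix n assume n: "n \<in> {n\<in>X. e \<le> cmod (f n + g n)}"
    have "cmod (f n + g n) \<le> cmod (f n) + cmod (g n)" by (rule norm_triangle_ineq)
    then show "n \<in> {n\<in>X. e/2 \<le> cmod (f n)} \<union> {n\<in>X. e/2 \<le> cmod (g n)}" using n by auto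
  qed
  ultimately show "finite {n\<in>X. e \<le> cmod (f n + g n)}" by (rule finite_subset[rotated])
qed

lemma small_mult: assumes f: "small X f" and g: "\<And>n. n \<in> X \<Longrightarrow> cmod (g n) \<le> K"
  shows "small X (\<lambda>n. g n * f n)"
  unfolding small_def
proof (intro allI impI)
  fix e :: real assume e: "e > 0"
  define K' where "K' = max K 1"
  have K': "K' > 0" "K \<le> K'" by (auto simp: K'_def)
  have "finite {n\<in>X. e / K' \<le> cmod (f n)}" using f e K' by (simp add: small_def)
  moreover have "{n\<in>X. e \<le> cmod (g n * f n)} \<subseteq> {n\<in>X. e / K' \<le> cmod (f n)}"
  proof
    fix n assume n: "n \<in> {n\<in>X. e \<le> cmod (g n * f n)}"
    have "cmod (g n * f n) \<le> K' * cmod (f n)"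
      unfolding norm_mult using g[of n] n K' by (intro mult_right_mono) auto
    then have "e \<le> K' * cmod (f n)" using n by auto
    then show "n \<in> {n\<in>X. e / K' \<le> cmod (f n)}" using n K' by (simp add: divide_le_eq mult.commute)
  qed
  ultimately show "finite {n\<in>X. e \<le> cmod (g n * f n)}" by (rule finite_subset[rotated])
qed

lemma small_cmult: "small X f \<Longrightarrow> small X (\<lambda>n. c * f n)"
  using small_mult[of X f "\<lambda>n. c" "cmod c"] by simp

lemma small_diff: "small X f \<Longrightarrow> small X g \<Longrightarrow> small X (\<lambda>n. f n - g n)"
  using small_add[of X f "\<lambda>n. (-1) * g n"] small_cmult[of X g "-1"] by simp

lemma norm4: "cmod (a + b + c + d) \<le> cmod a + cmod b + cmod c + cmod d"
  using norm_triangle_ineq[of "a+b+c" d] norm_triangle_ineq[of "a+b" c] norm_triangle_ineq[of a b] by linarith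

lemma small_subset: assumes "small X f" "Y \<subseteq> X" shows "small Y f"
  unfolding small_def
proof (intro allI impI)
  fix e :: real assume "e > 0"
  then have "finite {n \<in> X. e \<le> cmod (f n)}" using assms(1) by (simp add: small_def)
  then show "finite {n \<in> Y. e \<le> cmod (f n)}" by (rule finite_subset[rotated]) (use assms(2) in auto)
qed

lemma small_restrict: "small X f \<Longrightarrow> small UNIV (\<lambda>n. if n \<in> X then f n else 0)"
  unfolding small_def
proof (intro allI impI)
  fix e :: real assume "\<forall>e>0. finite {n \<in> X. e \<le> cmod (f n)}" "e > 0"
  then have "finite {n \<in> X. e \<le> cmod (f n)}" by blast
  moreover have "{n \<in> UNIV. e \<le> cmod (if n \<in> X then f n else 0)} \<subseteq> {n \<in> X. e \<le> cmod (f n)}"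
    using \<open>e > 0\<close> by auto
  ultimately show "finite {n \<in> UNIV. e \<le> cmod (if n \<in> X then f n else 0)}" by (rule finite_subset[rotated])
qed

definition cf :: "real \<Rightarrow> nat \<Rightarrow> nat \<Rightarrow> real" where
  "cf \<alpha> q i = (if q = 0 then (if i = 0 then \<alpha> else sqrt (1 - \<alpha>\<^sup>2))
                else (if i = 0 then sqrt (1 - \<alpha>\<^sup>2) else - \<alpha>))"

definition fe :: "real \<Rightarrow> (nat \<Rightarrow> nat \<Rightarrow> nat \<Rightarrow> complex) \<Rightarrow> nat \<Rightarrow> nat \<Rightarrow> nat \<Rightarrow> complex" where
  "fe \<alpha> B n p q = (\<Sum>i<2. \<Sum>j<2. of_real (cf \<alpha> p i) * B n i j * of_real (cf \<alpha> q j))"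

definition alpha_ok :: "real \<Rightarrow> bool" where "alpha_ok \<alpha> \<longleftrightarrow> 0 < \<alpha> \<and> \<alpha> \<le> 1"

lemma alpha_sq: assumes "alpha_ok \<alpha>" shows "\<alpha>\<^sup>2 + (sqrt (1 - \<alpha>\<^sup>2))\<^sup>2 = 1"
proof -
  have "\<alpha>\<^sup>2 \<le> 1" using assms unfolding alpha_ok_def by (simp add: power_le_one)
  then show ?thesis by simp
qed

lemma cf_bound: assumes "alpha_ok \<alpha>" shows "\<bar>cf \<alpha> q i\<bar> \<le> 1"
proof -
  have a: "\<alpha>\<^sup>2 \<le> 1" "0 \<le> \<alpha>" using assms unfolding alpha_ok_def by (auto simp: power_le_one)
  have "sqrt (1 - \<alpha>\<^sup>2) \<le> 1" using a by simp
  then show ?thesis using a assms unfolding cf_def alpha_ok_def by auto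
qed

lemma fe_expand: "fe \<alpha> B n p q =
   of_real (cf \<alpha> p 0) * B n 0 0 * of_real (cf \<alpha> q 0) + of_real (cf \<alpha> p 0) * B n 0 1 * of_real (cf \<alpha> q 1)
 + of_real (cf \<alpha> p 1) * B n 1 0 * of_real (cf \<alpha> q 0) + of_real (cf \<alpha> p 1) * B n 1 1 * of_real (cf \<alpha> q 1)"
  by (simp add: fe_def numeral_2_eq_2)

lemma fe_cong: "(\<And>i j. i < 2 \<Longrightarrow> j < 2 \<Longrightarrow> B n i j = C n i j) \<Longrightarrow> fe \<alpha> B n p q = fe \<alpha> C n p q"
  unfolding fe_expand by simp

lemma small_fe:
  assumes "alpha_ok \<alpha>" "\<And>i j. i < 2 \<Longrightarrow> j < 2 \<Longrightarrow> small X (\<lambda>n. B n i j)"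
  shows "small X (\<lambda>n. fe \<alpha> B n p q)"
proof -
  have c: "cmod (of_real (cf \<alpha> p i) * of_real (cf \<alpha> q j)) \<le> 1" for i j
    using cf_bound[OF assms(1)] by (simp add: norm_mult abs_mult mult_le_one)
  have s: "small X (\<lambda>n. of_real (cf \<alpha> p i) * of_real (cf \<alpha> q j) * B n i j)" if "i < 2" "j < 2" for i j
    by (rule small_mult[OF assms(2)[OF that] c])
  have "small X (\<lambda>n. of_real (cf \<alpha> p 0) * of_real (cf \<alpha> q 0) * B n 0 0 + of_real (cf \<alpha> p 0) * of_real (cf \<alpha> q 1) * B n 0 1
      + of_real (cf \<alpha> p 1) * of_real (cf \<alpha> q 0) * B n 1 0 + of_real (cf \<alpha> p 1) * of_real (cf \<alpha> q 1) * B n 1 1)"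
    by (intro small_add s) auto
  then show ?thesis unfolding fe_expand by (simp add: ac_simps)
qed

lemma fe_bound: assumes "alpha_ok \<alpha>" "bnd B K" shows "cmod (fe \<alpha> B n p q) \<le> 4 * K"
proof -
  have t: "cmod (of_real (cf \<alpha> p i) * B n i j * of_real (cf \<alpha> q j)) \<le> K" if "i < 2" "j < 2" for i j
  proof -
    have "cmod (of_real (cf \<alpha> p i) * B n i j * of_real (cf \<alpha> q j)) = \<bar>cf \<alpha> p i\<bar> * cmod (B n i j) * \<bar>cf \<alpha> q j\<bar>"
      by (simp add: norm_mult)
    also have "\<dots> \<le> 1 * K * 1" using cf_bound[OF assms(1)] bndD[OF assms(2) that] bnd_nonneg[OF assms(2)]
      by (intro mult_mono) auto
    finally show ?thesis by simp
  qed
  show ?thesis unfolding fe_expand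
    by (rule order_trans[OF norm4]) (use t[of 0 0] t[of 0 1] t[of 1 0] t[of 1 1] in simp)
qed

lemma cf_vals: "cf \<alpha> 0 0 = \<alpha>" "cf \<alpha> 0 1 = sqrt (1 - \<alpha>\<^sup>2)" "cf \<alpha> 1 0 = sqrt (1 - \<alpha>\<^sup>2)" "cf \<alpha> 1 1 = - \<alpha>"
  by (simp_all add: cf_def)

lemma orth_c: assumes "alpha_ok \<alpha>"
  shows "of_real (cf \<alpha> 0 0) * of_real (cf \<alpha> 0 0) + of_real (cf \<alpha> 1 0) * of_real (cf \<alpha> 1 0) = (1::complex)"
    "of_real (cf \<alpha> 0 0) * of_real (cf \<alpha> 0 1) + of_real (cf \<alpha> 1 0) * of_real (cf \<alpha> 1 1) = (0::complex)"
    "of_real (cf \<alpha> 0 1) * of_real (cf \<alpha> 0 1) + of_real (cf \<alpha> 1 1) * of_real (cf \<alpha> 1 1) = (1::complex)"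
    "of_real (cf \<alpha> 0 0) * of_real (cf \<alpha> 1 0) + of_real (cf \<alpha> 0 1) * of_real (cf \<alpha> 1 1) = (0::complex)"
    "of_real (cf \<alpha> 0 0) * of_real (cf \<alpha> 0 0) + of_real (cf \<alpha> 0 1) * of_real (cf \<alpha> 0 1) = (1::complex)"
    "of_real (cf \<alpha> 1 0) * of_real (cf \<alpha> 1 0) + of_real (cf \<alpha> 1 1) * of_real (cf \<alpha> 1 1) = (1::complex)"
proof -
  have h: "\<alpha> * \<alpha> + sqrt (1 - \<alpha>\<^sup>2) * sqrt (1 - \<alpha>\<^sup>2) = 1" using alpha_sq[OF assms] by (simp add: power2_eq_square)
  have h': "complex_of_real \<alpha> * complex_of_real \<alpha> + complex_of_real (sqrt (1 - \<alpha>\<^sup>2)) * complex_of_real (sqrt (1 - \<alpha>\<^sup>2)) = 1"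
    using arg_cong[OF h, of complex_of_real] by (simp only: of_real_add of_real_mult of_real_1)
  show "of_real (cf \<alpha> 0 0) * of_real (cf \<alpha> 0 0) + of_real (cf \<alpha> 1 0) * of_real (cf \<alpha> 1 0) = (1::complex)"
    using h' by (simp only: cf_vals)
  show "of_real (cf \<alpha> 0 0) * of_real (cf \<alpha> 0 1) + of_real (cf \<alpha> 1 0) * of_real (cf \<alpha> 1 1) = (0::complex)"
    by (simp add: cf_def)
  show "of_real (cf \<alpha> 0 1) * of_real (cf \<alpha> 0 1) + of_real (cf \<alpha> 1 1) * of_real (cf \<alpha> 1 1) = (1::complex)"
    using h' by (simp only: cf_vals of_real_minus mult_minus_left mult_minus_right minus_minus add.commute)
  show "of_real (cf \<alpha> 0 0) * of_real (cf \<alpha> 1 0) + of_real (cf \<alpha> 0 1) * of_real (cf \<alpha> 1 1) = (0::complex)"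
    by (simp add: cf_def)
  show "of_real (cf \<alpha> 0 0) * of_real (cf \<alpha> 0 0) + of_real (cf \<alpha> 0 1) * of_real (cf \<alpha> 0 1) = (1::complex)"
    using h' by (simp only: cf_vals)
  show "of_real (cf \<alpha> 1 0) * of_real (cf \<alpha> 1 0) + of_real (cf \<alpha> 1 1) * of_real (cf \<alpha> 1 1) = (1::complex)"
    using h' by (simp only: cf_vals of_real_minus mult_minus_left mult_minus_right minus_minus add.commute)
qed

lemma fe_prod: assumes "alpha_ok \<alpha>"
  shows "fe \<alpha> (mprod A B) n p q = fe \<alpha> A n p 0 * fe \<alpha> B n 0 q + fe \<alpha> A n p 1 * fe \<alpha> B n 1 q"
  using orth_c[OF assms] unfolding fe_expand mprod_def by algebra

lemma fe_adj: "fe \<alpha> (madj B) n p q = cnj (fe \<alpha> B n q p)"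
  unfolding fe_expand madj_def by (simp add: algebra_simps)

lemma fe_madd: "fe \<alpha> (madd A B) n p q = fe \<alpha> A n p q + fe \<alpha> B n p q"
  unfolding fe_expand madd_def by (simp add: algebra_simps)

lemma fe_msc: "fe \<alpha> (msc c A) n p q = c * fe \<alpha> A n p q"
  unfolding fe_expand msc_def by (simp add: algebra_simps)

lemma fe_msub: "fe \<alpha> (msub A B) n p q = fe \<alpha> A n p q - fe \<alpha> B n p q"
  unfolding fe_expand msub_def by (simp add: algebra_simps)

definition Dg :: "real \<Rightarrow> (nat \<Rightarrow> nat \<Rightarrow> nat \<Rightarrow> complex) \<Rightarrow> nat \<Rightarrow> nat \<Rightarrow> nat \<Rightarrow> complex" where
  "Dg \<alpha> B = (\<lambda>n i j. of_real (cf \<alpha> 0 i) * fe \<alpha> B n 0 0 * of_real (cf \<alpha> 0 j) + of_real (cf \<alpha> 1 i) * fe \<alpha> B n 1 1 * of_real (cf \<alpha> 1 j))"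
definition Og :: "real \<Rightarrow> (nat \<Rightarrow> nat \<Rightarrow> nat \<Rightarrow> complex) \<Rightarrow> nat \<Rightarrow> nat \<Rightarrow> nat \<Rightarrow> complex" where
  "Og \<alpha> B = (\<lambda>n i j. of_real (cf \<alpha> 1 i) * fe \<alpha> B n 1 0 * of_real (cf \<alpha> 0 j) + of_real (cf \<alpha> 0 i) * fe \<alpha> B n 0 1 * of_real (cf \<alpha> 1 j))"

lemma recon_gen: assumes "alpha_ok \<alpha>" and that: "i < 2" "j < 2"
  shows "B n i j = Dg \<alpha> B n i j + Og \<alpha> B n i j"
proof -
  note o = orth_c[OF assms(1)]
  consider "i = 0" "j = 0" | "i = 0" "j = 1" | "i = 1" "j = 0" | "i = 1" "j = 1"
    using assms(2,3) less2_cases by metis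
  then show ?thesis
  proof cases
    case 1 show ?thesis unfolding 1 Dg_def Og_def fe_expand using o by algebra
  next
    case 2 show ?thesis unfolding 2 Dg_def Og_def fe_expand using o by algebra
  next
    case 3 show ?thesis unfolding 3 Dg_def Og_def fe_expand using o by algebra
  next
    case 4 show ?thesis unfolding 4 Dg_def Og_def fe_expand using o by algebra
  qed
qed

definition rX :: "nat set \<Rightarrow> (nat \<Rightarrow> nat \<Rightarrow> nat \<Rightarrow> complex) \<Rightarrow> nat \<Rightarrow> nat \<Rightarrow> nat \<Rightarrow> complex" where
  "rX X B = (\<lambda>n i j. if n \<in> X then B n i j else 0)"

lemma bnd_rX: "bnd B K \<Longrightarrow> bnd (rX X B) K"
  using bnd_nonneg by (auto simp: bnd_def rX_def)

lemma mk_op_cong: assumes "\<And>n i j. i < 2 \<Longrightarrow> j < 2 \<Longrightarrow> B n i j = C n i j" shows "mk_op B = mk_op C"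
proof -
  have "m mod 2 < 2" for m :: nat by simp
  then show ?thesis unfolding mk_op_def using assms by (simp add: fun_eq_iff)
qed

lemma mk_op_rX_A0on: assumes "bnd B K" shows "mk_op (rX X B) \<in> A0_on X"
  unfolding A0_on_def
proof (intro CollectI conjI allI impI)
  show "mk_op (rX X B) \<in> A0" by (rule mk_op_A0[OF bnd_rX[OF assms]])
  fix n assume n: "n \<notin> X"
  show "mk_op (rX X B) (\<e> (2*n)) = (\<lambda>k. 0)" unfolding mk_op_basis using n by (auto simp: rX_def fun_eq_iff)
  show "mk_op (rX X B) (\<e> (2*n+1)) = (\<lambda>k. 0)" unfolding mk_op_basis using n by (auto simp: rX_def fun_eq_iff)
qed

lemma PTP_mk: assumes K: "bnd B K" shows "projP X \<circ> mk_op B \<circ> projP X = mk_op (rX X B)"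
proof -
  have "projP X \<circ> mk_op B \<circ> projP X = mk_op (mprod (mprod (idX X) B) (idX X))"
    unfolding projP_mk mk_op_comp[OF K] mk_op_comp[OF bnd_idX] by (rule refl)
  also have "\<dots> = mk_op (rX X B)"
  proof (rule mk_op_cong)
    fix n i j :: nat assume "i < 2" "j < 2"
    then consider "i = 0" "j = 0" | "i = 0" "j = 1" | "i = 1" "j = 0" | "i = 1" "j = 1"
      using less2_cases by metis
    then show "mprod (mprod (idX X) B) (idX X) n i j = rX X B n i j"
      by cases (simp_all add: mprod_def idX_def rX_def)
  qed
  finally show ?thesis .
qed

lemma PTP: assumes T: "T \<in> A0" shows "projP X \<circ> T \<circ> projP X = mk_op (rX X (ent T))"
proof -
  have Tb: "T \<in> bounded_ops" using T by (simp add: A0_def)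
  obtain K where K: "bnd (ent T) K" using A0_bnd[OF Tb] by blast
  have "projP X \<circ> T \<circ> projP X = projP X \<circ> mk_op (ent T) \<circ> projP X"
    by (rule arg_cong[where f="\<lambda>S. projP X \<circ> S \<circ> projP X", OF A0_rep[OF T]])
  then show ?thesis using PTP_mk[OF K] by simp
qed

lemma fvec0: "fvec \<alpha> (2*n) m = of_real \<alpha> * \<e> (2*n) m + of_real (sqrt (1 - \<alpha>\<^sup>2)) * \<e> (2*n+1) m"
  by (simp add: fvec_def)

lemma fvec1: "fvec \<alpha> (2*n+1) m = of_real (sqrt (1 - \<alpha>\<^sup>2)) * \<e> (2*n) m - of_real \<alpha> * \<e> (2*n+1) m"
  by (simp add: fvec_def)

lemma fvec_eq: assumes "q < 2"
  shows "fvec \<alpha> (2*n+q) m = (if m div 2 = n then of_real (cf \<alpha> q (m mod 2)) else 0)"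
proof -
  have q: "q = 0 \<or> q = 1" using assms by auto
  consider "m = 2*n" | "m = 2*n+1" | "m \<noteq> 2*n" "m \<noteq> 2*n+1" "m div 2 \<noteq> n" by linarith
  then show ?thesis
  proof cases
    case 1 then show ?thesis using q fvec0[of \<alpha> n m] fvec1[of \<alpha> n m]
      by (elim disjE) (simp_all add: basis_vec_def cf_def)
  next
    case 2 then show ?thesis using q fvec0[of \<alpha> n m] fvec1[of \<alpha> n m]
      by (elim disjE) (simp_all add: basis_vec_def cf_def)
  next
    case 3 then show ?thesis using q fvec0[of \<alpha> n m] fvec1[of \<alpha> n m]
      by (elim disjE) (simp_all add: basis_vec_def)
  qed
qed

lemma fvec_l2: "fvec \<alpha> k \<in> l2"
  by (rule l2_finsupp[of "k+2"]) (auto simp: fvec_def basis_vec_def)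

lemma mk_op_fvec: assumes "q < 2"
  shows "mk_op C (fvec \<alpha> (2*n+q)) m = (if m div 2 = n then C n (m mod 2) 0 * of_real (cf \<alpha> q 0) + C n (m mod 2) 1 * of_real (cf \<alpha> q 1) else 0)"
  using fvec_l2 by (simp add: mk_op_def fvec_eq[OF assms])

lemma eig0:
  assumes a: "alpha_ok \<alpha>"
    and h0: "C n 0 0 * of_real (cf \<alpha> 0 0) + C n 0 1 * of_real (cf \<alpha> 0 1) = c * of_real (cf \<alpha> 0 0)"
    and h1: "C n 1 0 * of_real (cf \<alpha> 0 0) + C n 1 1 * of_real (cf \<alpha> 0 1) = c * of_real (cf \<alpha> 0 1)"
  shows "fe \<alpha> C n 1 0 = 0"
  using orth_c[OF a] h0 h1 unfolding fe_expand by algebra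

lemma eig1:
  assumes a: "alpha_ok \<alpha>"
    and h0: "C n 0 0 * of_real (cf \<alpha> 1 0) + C n 0 1 * of_real (cf \<alpha> 1 1) = d * of_real (cf \<alpha> 1 0)"
    and h1: "C n 1 0 * of_real (cf \<alpha> 1 0) + C n 1 1 * of_real (cf \<alpha> 1 1) = d * of_real (cf \<alpha> 1 1)"
  shows "fe \<alpha> C n 0 1 = 0"
  using orth_c[OF a] h0 h1 unfolding fe_expand by algebra

lemma Dg_eig0: assumes a: "alpha_ok \<alpha>" and i: "i < 2"
  shows "Dg \<alpha> B n i 0 * of_real (cf \<alpha> 0 0) + Dg \<alpha> B n i 1 * of_real (cf \<alpha> 0 1) = fe \<alpha> B n 0 0 * of_real (cf \<alpha> 0 i)"
  using orth_c[OF a] unfolding Dg_def by algebra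

lemma Dg_eig1: assumes a: "alpha_ok \<alpha>" and i: "i < 2"
  shows "Dg \<alpha> B n i 0 * of_real (cf \<alpha> 1 0) + Dg \<alpha> B n i 1 * of_real (cf \<alpha> 1 1) = fe \<alpha> B n 1 1 * of_real (cf \<alpha> 1 i)"
  using orth_c[OF a] unfolding Dg_def by algebra

lemma bnd_Dg: assumes a: "alpha_ok \<alpha>" and B: "bnd B K" shows "bnd (Dg \<alpha> B) (8 * K)"
  unfolding bnd_def
proof (intro allI impI)
  fix n i j :: nat assume "i < 2" "j < 2"
  have t: "cmod (of_real (cf \<alpha> p i) * fe \<alpha> B n r r * of_real (cf \<alpha> p j)) \<le> 4 * K" for p r
  proof -
    have "cmod (of_real (cf \<alpha> p i) * fe \<alpha> B n r r * of_real (cf \<alpha> p j)) = \<bar>cf \<alpha> p i\<bar> * cmod (fe \<alpha> B n r r) * \<bar>cf \<alpha> p j\<bar>"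
      by (simp add: norm_mult)
    also have "\<dots> \<le> 1 * (4 * K) * 1" using cf_bound[OF a] fe_bound[OF a B] bnd_nonneg[OF B]
      by (intro mult_mono) auto
    finally show ?thesis by simp
  qed
  show "cmod (Dg \<alpha> B n i j) \<le> 8 * K" unfolding Dg_def
    using norm_triangle_ineq t[of 0 0] t[of 1 1] by (smt (verit))
qed

lemma bnd_Og: assumes a: "alpha_ok \<alpha>" and B: "bnd B K" shows "bnd (Og \<alpha> B) (8 * K)"
  unfolding bnd_def
proof (intro allI impI)
  fix n i j :: nat assume "i < 2" "j < 2"
  have t: "cmod (of_real (cf \<alpha> p i) * fe \<alpha> B n r s * of_real (cf \<alpha> q j)) \<le> 4 * K" for p q r s
  proof -
    have "cmod (of_real (cf \<alpha> p i) * fe \<alpha> B n r s * of_real (cf \<alpha> q j)) = \<bar>cf \<alpha> p i\<bar> * cmod (fe \<alpha> B n r s) * \<bar>cf \<alpha> q j\<bar>"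
      by (simp add: norm_mult)
    also have "\<dots> \<le> 1 * (4 * K) * 1" using cf_bound[OF a] fe_bound[OF a B] bnd_nonneg[OF B]
      by (intro mult_mono) auto
    finally show ?thesis by simp
  qed
  show "cmod (Og \<alpha> B n i j) \<le> 8 * K" unfolding Og_def
    using norm_triangle_ineq t[of 1 1 0 0] t[of 0 0 1 1] by (smt (verit))
qed

lemma small_Og: assumes a: "alpha_ok \<alpha>" and s10: "small X (\<lambda>n. fe \<alpha> B n 1 0)" and s01: "small X (\<lambda>n. fe \<alpha> B n 0 1)"
  shows "small X (\<lambda>n. Og \<alpha> B n i j)"
proof -
  have c: "cmod (of_real (cf \<alpha> p i) * of_real (cf \<alpha> q j)) \<le> 1" for p q
    using cf_bound[OF a] by (simp add: norm_mult abs_mult mult_le_one)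
  have "small X (\<lambda>n. (of_real (cf \<alpha> 1 i) * of_real (cf \<alpha> 0 j)) * fe \<alpha> B n 1 0 + (of_real (cf \<alpha> 0 i) * of_real (cf \<alpha> 1 j)) * fe \<alpha> B n 0 1)"
    by (intro small_add small_mult[OF s10 c] small_mult[OF s01 c])
  then show ?thesis unfolding Og_def by (simp add: ac_simps)
qed

lemma A0_on_A0: "R \<in> A0_on X \<Longrightarrow> R \<in> A0" by (simp add: A0_on_def)
lemma A0_bo: "R \<in> A0 \<Longrightarrow> R \<in> bounded_ops" by (simp add: A0_def)

lemma DK_char:
  assumes B: "bnd B K" and a: "alpha_ok \<alpha>"
  shows "mk_op (rX X B) \<in> DKset X \<alpha> \<longleftrightarrow> small X (\<lambda>n. fe \<alpha> B n 1 0) \<and> small X (\<lambda>n. fe \<alpha> B n 0 1)"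
proof
  assume "mk_op (rX X B) \<in> DKset X \<alpha>"
  then obtain S R where eq: "mk_op (rX X B) = op_add S R" and S: "S \<in> Dset X \<alpha>"
    and Rc: "compact_op R" and RA: "R \<in> A0_on X"
    unfolding DKset_def by blast
  have SA: "S \<in> A0" using S by (simp add: Dset_def A0_on_def)
  have RA': "R \<in> A0" using A0_on_A0[OF RA] .
  obtain KS where KS: "bnd (ent S) KS" using A0_bnd[OF A0_bo[OF SA]] by blast
  obtain KR where KR: "bnd (ent R) KR" using A0_bnd[OF A0_bo[OF RA']] by blast
  have "op_add S R = op_add (mk_op (ent S)) (mk_op (ent R))"
    by (rule arg_cong2[where f=op_add, OF A0_rep[OF SA] A0_rep[OF RA']])
  then have eq2: "mk_op (rX X B) = mk_op (madd (ent S) (ent R))" using eq op_add_mk by simp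
  have ents: "rX X B n i j = ent S n i j + ent R n i j" if "i < 2" "j < 2" for n i j
    using arg_cong[OF eq2, of "\<lambda>T. ent T n i j"] ent_mk_op[OF that] by (simp add: madd_def)
  have fes: "fe \<alpha> B n p q = fe \<alpha> (ent S) n p q + fe \<alpha> (ent R) n p q" if n: "n \<in> X" for n p q
  proof -
    have "fe \<alpha> B n p q = fe \<alpha> (madd (ent S) (ent R)) n p q"
    proof (rule fe_cong)
      fix i j :: nat assume ij: "i < 2" "j < 2"
      show "B n i j = madd (ent S) (ent R) n i j" using ents[OF ij, of n] n by (simp add: rX_def madd_def)
    qed
    then show ?thesis by (simp add: fe_madd)
  qed
  have Sz: "fe \<alpha> (ent S) n 1 0 = 0 \<and> fe \<alpha> (ent S) n 0 1 = 0" if n: "n \<in> X" for n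
  proof -
    obtain c d where c: "S (fvec \<alpha> (2*n)) = (\<lambda>m. c * fvec \<alpha> (2*n) m)"
      and d: "S (fvec \<alpha> (2*n+1)) = (\<lambda>m. d * fvec \<alpha> (2*n+1) m)"
      using S n unfolding Dset_def by blast
    have Se: "S = mk_op (ent S)" by (rule A0_rep[OF SA])
    have v0: "mk_op (ent S) (fvec \<alpha> (2*n+0)) (2*n+i) = c * fvec \<alpha> (2*n+0) (2*n+i)" for i
      using c Se by (metis add_0_right)
    have v1: "mk_op (ent S) (fvec \<alpha> (2*n+1)) (2*n+i) = d * fvec \<alpha> (2*n+1) (2*n+i)" for i
      using d Se by metis
    have w0: "ent S n i 0 * of_real (cf \<alpha> 0 0) + ent S n i 1 * of_real (cf \<alpha> 0 1) = c * of_real (cf \<alpha> 0 i)" if "i < 2" for i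
    proof -
      have dm: "(2*n+i) div 2 = n" "(2*n+i) mod 2 = i" using that by auto
      show ?thesis using v0[of i] mk_op_fvec[of 0 "ent S" \<alpha> n "2*n+i"] fvec_eq[of 0 \<alpha> n "2*n+i"] dm by simp
    qed
    have w1: "ent S n i 0 * of_real (cf \<alpha> 1 0) + ent S n i 1 * of_real (cf \<alpha> 1 1) = d * of_real (cf \<alpha> 1 i)" if "i < 2" for i
    proof -
      have dm: "(2*n+i) div 2 = n" "(2*n+i) mod 2 = i" using that by auto
      show ?thesis using v1[of i] mk_op_fvec[of 1 "ent S" \<alpha> n "2*n+i"] fvec_eq[of 1 \<alpha> n "2*n+i"] dm by simp
    qed
    have "fe \<alpha> (ent S) n 1 0 = 0" using eig0[OF a, of "ent S" n c] w0[of 0] w0[of 1] by simp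
    moreover have "fe \<alpha> (ent S) n 0 1 = 0" using eig1[OF a, of "ent S" n d] w1[of 0] w1[of 1] by simp
    ultimately show ?thesis by simp
  qed
  have sR: "small X (\<lambda>n. fe \<alpha> (ent R) n p q)" for p q
    by (rule small_fe[OF a compact_small[OF Rc RA']])
  show "small X (\<lambda>n. fe \<alpha> B n 1 0) \<and> small X (\<lambda>n. fe \<alpha> B n 0 1)"
  proof
    have e10: "fe \<alpha> B n 1 0 = fe \<alpha> (ent R) n 1 0" if "n \<in> X" for n
      using fes[OF that, of 1 0] Sz[OF that] by simp
    have e01: "fe \<alpha> B n 0 1 = fe \<alpha> (ent R) n 0 1" if "n \<in> X" for n
      using fes[OF that, of 0 1] Sz[OF that] by simp
    show "small X (\<lambda>n. fe \<alpha> B n 1 0)" by (rule small_le[OF sR[of 1 0]]) (metis e10 order_refl)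
    show "small X (\<lambda>n. fe \<alpha> B n 0 1)" by (rule small_le[OF sR[of 0 1]]) (metis e01 order_refl)
  qed
next
  assume sm: "small X (\<lambda>n. fe \<alpha> B n 1 0) \<and> small X (\<lambda>n. fe \<alpha> B n 0 1)"
  define S where "S = mk_op (rX X (Dg \<alpha> B))"
  define R where "R = mk_op (rX X (Og \<alpha> B))"
  have bD: "bnd (Dg \<alpha> B) (8*K)" by (rule bnd_Dg[OF a B])
  have bO: "bnd (Og \<alpha> B) (8*K)" by (rule bnd_Og[OF a B])
  have eq: "mk_op (rX X B) = op_add S R"
    unfolding S_def R_def op_add_mk
  proof (rule mk_op_cong)
    fix n i j :: nat assume ij: "i < 2" "j < 2"
    show "rX X B n i j = madd (rX X (Dg \<alpha> B)) (rX X (Og \<alpha> B)) n i j"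
      using recon_gen[OF a ij, of B n] by (simp add: rX_def madd_def)
  qed
  have SD: "S \<in> Dset X \<alpha>"
    unfolding Dset_def
  proof (intro CollectI conjI ballI)
    show "S \<in> A0_on X" unfolding S_def by (rule mk_op_rX_A0on[OF bD])
    fix n assume n: "n \<in> X"
    have "S (fvec \<alpha> (2*n)) = (\<lambda>m. fe \<alpha> B n 0 0 * fvec \<alpha> (2*n) m)"
    proof
      fix m :: nat
      have "m mod 2 < 2" by simp
      then show "S (fvec \<alpha> (2*n)) m = fe \<alpha> B n 0 0 * fvec \<alpha> (2*n) m"
        using mk_op_fvec[of 0 "rX X (Dg \<alpha> B)" \<alpha> n m] fvec_eq[of 0 \<alpha> n m] n Dg_eig0[OF a, of "m mod 2" B n]
        unfolding S_def by (simp add: rX_def)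
    qed
    moreover have "S (fvec \<alpha> (2*n+1)) = (\<lambda>m. fe \<alpha> B n 1 1 * fvec \<alpha> (2*n+1) m)"
    proof
      fix m :: nat
      have "m mod 2 < 2" by simp
      then show "S (fvec \<alpha> (2*n+1)) m = fe \<alpha> B n 1 1 * fvec \<alpha> (2*n+1) m"
        using mk_op_fvec[of 1 "rX X (Dg \<alpha> B)" \<alpha> n m] fvec_eq[of 1 \<alpha> n m] n Dg_eig1[OF a, of "m mod 2" B n]
        unfolding S_def by (simp add: rX_def)
    qed
    ultimately show "\<exists>c d. S (fvec \<alpha> (2*n)) = (\<lambda>m. c * fvec \<alpha> (2*n) m) \<and>
      S (fvec \<alpha> (2*n+1)) = (\<lambda>m. d * fvec \<alpha> (2*n+1) m)" by blast
  qed
  have Rc: "compact_op R" unfolding R_def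
  proof (rule small_compact[OF bnd_rX[OF bO]], intro allI impI)
    fix i j :: nat
    show "small UNIV (\<lambda>n. rX X (Og \<alpha> B) n i j)"
      using small_restrict[OF small_Og[OF a conjunct1[OF sm] conjunct2[OF sm], of i j]]
      by (simp add: rX_def)
  qed
  have RA: "R \<in> A0_on X" unfolding R_def by (rule mk_op_rX_A0on[OF bO])
  show "mk_op (rX X B) \<in> DKset X \<alpha>" unfolding DKset_def using eq SD Rc RA by blast
qed

definition good :: "nat set set \<Rightarrow> (nat set \<Rightarrow> real) \<Rightarrow> (nat \<Rightarrow> nat \<Rightarrow> nat \<Rightarrow> complex) \<Rightarrow> bool" where
  "good \<X> \<alpha> B \<longleftrightarrow> (\<forall>X\<in>\<X>. small X (\<lambda>n. fe (\<alpha> X) B n 1 0) \<and> small X (\<lambda>n. fe (\<alpha> X) B n 0 1))"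

lemma Mset_char:
  assumes a: "\<forall>X\<in>\<X>. alpha_ok (\<alpha> X)"
  shows "T \<in> Mset \<X> \<alpha> \<longleftrightarrow> T \<in> A0 \<and> good \<X> \<alpha> (ent T)"
proof (cases "T \<in> A0")
  case True
  obtain K where K: "bnd (ent T) K" using A0_bnd[OF A0_bo[OF True]] by blast
  have "\<forall>X\<in>\<X>. (projP X \<circ> T \<circ> projP X \<in> DKset X (\<alpha> X)) \<longleftrightarrow>
      (small X (\<lambda>n. fe (\<alpha> X) (ent T) n 1 0) \<and> small X (\<lambda>n. fe (\<alpha> X) (ent T) n 0 1))"
    using PTP[OF True] DK_char[OF K] a by simp
  then show ?thesis unfolding Mset_def good_def using True by auto
next
  case False
  then show ?thesis by (simp add: Mset_def)
qed

lemma good_cong: assumes "\<And>n i j. i < 2 \<Longrightarrow> j < 2 \<Longrightarrow> B n i j = C n i j"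
  shows "good \<X> \<alpha> B \<longleftrightarrow> good \<X> \<alpha> C"
proof -
  have "fe a B n p q = fe a C n p q" for a n p q by (rule fe_cong) (rule assms)
  then show ?thesis unfolding good_def by simp
qed

lemma ent_mk_good: "good \<X> \<alpha> (ent (mk_op B)) \<longleftrightarrow> good \<X> \<alpha> B"
  by (rule good_cong) (simp add: ent_mk_op)

lemma mk_Mset: assumes a: "\<forall>X\<in>\<X>. alpha_ok (\<alpha> X)" and B: "bnd B K"
  shows "mk_op B \<in> Mset \<X> \<alpha> \<longleftrightarrow> good \<X> \<alpha> B"
  using Mset_char[OF a, of "mk_op B"] mk_op_A0[OF B] ent_mk_good by simp

lemma Mset_rep: assumes a: "\<forall>X\<in>\<X>. alpha_ok (\<alpha> X)" and T: "T \<in> Mset \<X> \<alpha>"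
  shows "\<exists>K. bnd (ent T) K \<and> T = mk_op (ent T) \<and> good \<X> \<alpha> (ent T)"
proof -
  have TA: "T \<in> A0" and g: "good \<X> \<alpha> (ent T)" using Mset_char[OF a] T by auto
  obtain K where "bnd (ent T) K" using A0_bnd[OF A0_bo[OF TA]] by blast
  then show ?thesis using A0_rep[OF TA] g by blast
qed

lemma good_add: "good \<X> \<alpha> B \<Longrightarrow> good \<X> \<alpha> C \<Longrightarrow> good \<X> \<alpha> (madd B C)"
  unfolding good_def fe_madd by (auto intro: small_add)

lemma good_sc: "good \<X> \<alpha> B \<Longrightarrow> good \<X> \<alpha> (msc c B)"
  unfolding good_def fe_msc by (auto intro: small_cmult)

lemma good_adj: "good \<X> \<alpha> B \<Longrightarrow> good \<X> \<alpha> (madj B)"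
  unfolding good_def fe_adj by (auto intro: small_le)

lemma good_prod: assumes a: "\<forall>X\<in>\<X>. alpha_ok (\<alpha> X)" and A: "bnd A K" and B: "bnd B L"
  and gA: "good \<X> \<alpha> A" and gB: "good \<X> \<alpha> B"
  shows "good \<X> \<alpha> (mprod A B)"
  unfolding good_def
proof
  fix X assume X: "X \<in> \<X>"
  have aX: "alpha_ok (\<alpha> X)" using a X by blast
  have sA: "small X (\<lambda>n. fe (\<alpha> X) A n 1 0)" "small X (\<lambda>n. fe (\<alpha> X) A n 0 1)" using gA X by (auto simp: good_def)
  have sB: "small X (\<lambda>n. fe (\<alpha> X) B n 1 0)" "small X (\<lambda>n. fe (\<alpha> X) B n 0 1)" using gB X by (auto simp: good_def)
  have bA: "cmod (fe (\<alpha> X) A n p q) \<le> 4 * K" for n p q by (rule fe_bound[OF aX A])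
  have bB: "cmod (fe (\<alpha> X) B n p q) \<le> 4 * L" for n p q by (rule fe_bound[OF aX B])
  have "small X (\<lambda>n. fe (\<alpha> X) B n 0 0 * fe (\<alpha> X) A n 1 0 + fe (\<alpha> X) A n 1 1 * fe (\<alpha> X) B n 1 0)"
    by (intro small_add small_mult[OF sA(1) bB] small_mult[OF sB(1) bA])
  moreover have "small X (\<lambda>n. fe (\<alpha> X) A n 0 0 * fe (\<alpha> X) B n 0 1 + fe (\<alpha> X) B n 1 1 * fe (\<alpha> X) A n 0 1)"
    by (intro small_add small_mult[OF sA(2) bB] small_mult[OF sB(2) bA])
  ultimately show "small X (\<lambda>n. fe (\<alpha> X) (mprod A B) n 1 0) \<and> small X (\<lambda>n. fe (\<alpha> X) (mprod A B) n 0 1)"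
    unfolding fe_prod[OF aX] by (simp add: ac_simps)
qed

lemma Mset_closed_limit:
  assumes a: "\<forall>X\<in>\<X>. alpha_ok (\<alpha> X)" and T: "T \<in> bounded_ops"
    and lim: "\<forall>e>0. \<exists>S\<in>Mset \<X> \<alpha>. opnorm (op_diff T S) < e"
  shows "T \<in> Mset \<X> \<alpha>"
proof -
  have close: "cmod (T (\<e> k) m - S (\<e> k) m) < e" if "S \<in> Mset \<X> \<alpha>" "opnorm (op_diff T S) < e" for S e k m
  proof -
    have "S \<in> bounded_ops" using that(1) Mset_char[OF a] A0_bo by blast
    then show ?thesis using opnorm_diff_lower[OF T] that(2) by (meson le_less_trans)
  qed
  have TA: "T \<in> A0" unfolding A0_def
  proof (intro CollectI conjI T allI impI)
    fix k m :: nat assume nz: "T (\<e> k) m \<noteq> 0"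
    show "\<exists>n. {k, m} \<subseteq> {2*n, 2*n+1}"
    proof (cases "k div 2 = m div 2")
      case True
      then show ?thesis by (intro exI[of _ "m div 2"]) auto
    next
      case False
      have "T (\<e> k) m = 0"
      proof (rule eq_if_close)
        fix e :: real assume e: "e > 0"
        obtain S where S: "S \<in> Mset \<X> \<alpha>" "opnorm (op_diff T S) < e" using lim e by blast
        have "S (\<e> k) m = 0" using A0_block_zero[OF _ False] S(1) Mset_char[OF a] by blast
        then show "cmod (T (\<e> k) m - 0) < e" using close[OF S, of k m] by simp
      qed
      then show ?thesis using nz by blast
    qed
  qed
  obtain K where K: "bnd (ent T) K" using A0_bnd[OF T] by blast
  have "good \<X> \<alpha> (ent T)" unfolding good_def
  proof
    fix X assume X: "X \<in> \<X>"
    have aX: "alpha_ok (\<alpha> X)" using a X by blast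
    have sm: "small X (\<lambda>n. fe (\<alpha> X) (ent T) n p q)" if pq: "(p = 1 \<and> q = 0) \<or> (p = 0 \<and> q = 1)" for p q
      unfolding small_def
    proof (intro allI impI)
      fix e :: real assume e: "e > 0"
      obtain S where S: "S \<in> Mset \<X> \<alpha>" "opnorm (op_diff T S) < e/8" using lim e
        by (meson divide_pos_pos zero_less_numeral)
      obtain KS where KS: "bnd (ent S) KS" "good \<X> \<alpha> (ent S)" using Mset_rep[OF a S(1)] by blast
      have sS: "small X (\<lambda>n. fe (\<alpha> X) (ent S) n p q)" using KS(2) X pq unfolding good_def by auto
      have e2: "e/2 > 0" using e by simp
      have fS: "finite {n\<in>X. e/2 \<le> cmod (fe (\<alpha> X) (ent S) n p q)}"
        using sS e2 unfolding small_def by blast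
      have bd: "bnd (msub (ent T) (ent S)) (e/8)"
        unfolding bnd_def msub_def ent_def using close[OF S] less_imp_le by blast
      have "{n\<in>X. e \<le> cmod (fe (\<alpha> X) (ent T) n p q)} \<subseteq> {n\<in>X. e/2 \<le> cmod (fe (\<alpha> X) (ent S) n p q)}"
      proof
        fix n assume n: "n \<in> {n\<in>X. e \<le> cmod (fe (\<alpha> X) (ent T) n p q)}"
        have "cmod (fe (\<alpha> X) (ent T) n p q - fe (\<alpha> X) (ent S) n p q) \<le> 4 * (e/8)"
          using fe_bound[OF aX bd, of n p q] by (simp add: fe_msub)
        then have "cmod (fe (\<alpha> X) (ent T) n p q) \<le> cmod (fe (\<alpha> X) (ent S) n p q) + e/2"
          using norm_triangle_ineq2[of "fe (\<alpha> X) (ent T) n p q" "fe (\<alpha> X) (ent S) n p q"] by linarith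
        then show "n \<in> {n\<in>X. e/2 \<le> cmod (fe (\<alpha> X) (ent S) n p q)}" using n by auto
      qed
      then show "finite {n\<in>X. e \<le> cmod (fe (\<alpha> X) (ent T) n p q)}" using fS finite_subset by blast
    qed
    show "small X (\<lambda>n. fe (\<alpha> X) (ent T) n 1 0) \<and> small X (\<lambda>n. fe (\<alpha> X) (ent T) n 0 1)"
      using sm by blast
  qed
  then show ?thesis using Mset_char[OF a] TA by blast
qed

lemma Mset_cstar: assumes a: "\<forall>X\<in>\<X>. alpha_ok (\<alpha> X)" shows "is_cstar_subalg (Mset \<X> \<alpha>)"
  unfolding is_cstar_subalg_def
proof (intro conjI ballI allI impI)
  show "Mset \<X> \<alpha> \<subseteq> bounded_ops" using Mset_char[OF a] A0_bo by blast
next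
  fix S T assume S: "S \<in> Mset \<X> \<alpha>" and T: "T \<in> Mset \<X> \<alpha>"
  obtain K where K: "bnd (ent S) K" "S = mk_op (ent S)" "good \<X> \<alpha> (ent S)" using Mset_rep[OF a S] by blast
  obtain L where L: "bnd (ent T) L" "T = mk_op (ent T)" "good \<X> \<alpha> (ent T)" using Mset_rep[OF a T] by blast
  have "op_add S T = mk_op (madd (ent S) (ent T))" using K(2) L(2) op_add_mk by metis
  then show "op_add S T \<in> Mset \<X> \<alpha>"
    using mk_Mset[OF a bnd_add[OF K(1) L(1)]] good_add[OF K(3) L(3)] by simp
  have "S \<circ> T = mk_op (mprod (ent S) (ent T))" using K(2) L(2) mk_op_comp[OF L(1)] by metis
  then show "S \<circ> T \<in> Mset \<X> \<alpha>"
    using mk_Mset[OF a bnd_prod[OF K(1) L(1)]] good_prod[OF a K(1) L(1) K(3) L(3)] by simp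
next
  fix c T assume T: "T \<in> Mset \<X> \<alpha>"
  obtain L where L: "bnd (ent T) L" "T = mk_op (ent T)" "good \<X> \<alpha> (ent T)" using Mset_rep[OF a T] by blast
  have "op_scale c T = mk_op (msc c (ent T))" using L(2) op_scale_mk by metis
  then show "op_scale c T \<in> Mset \<X> \<alpha>"
    using mk_Mset[OF a bnd_sc[OF L(1)]] good_sc[OF L(3)] by simp
next
  fix T assume T: "T \<in> Mset \<X> \<alpha>"
  obtain L where L: "bnd (ent T) L" "T = mk_op (ent T)" "good \<X> \<alpha> (ent T)" using Mset_rep[OF a T] by blast
  have "adj T = mk_op (madj (ent T))" using L(2) mk_op_adj[OF L(1)] by metis
  then show "adj T \<in> Mset \<X> \<alpha>"
    using mk_Mset[OF a bnd_adj[OF L(1)]] good_adj[OF L(3)] by simp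
next
  fix T assume "T \<in> bounded_ops" "\<forall>e>0. \<exists>S\<in>Mset \<X> \<alpha>. opnorm (op_diff T S) < e"
  then show "T \<in> Mset \<X> \<alpha>" by (rule Mset_closed_limit[OF a])
qed

lemma idem_abs:
  fixes m e p q r :: complex
  assumes h1: "4 * (p * p + q * r) = 1" and h2: "4 * m * m + e * e = 4 * m" and h3: "2 * m * e = e"
  shows "(m + e * p) * (m + e * p) + (e * q) * (e * r) = m + e * p"
    and "(m + e * p) * (e * q) + (e * q) * (m - e * p) = e * q"
    and "(e * r) * (m + e * p) + (m - e * p) * (e * r) = e * r"
    and "(e * r) * (e * q) + (m - e * p) * (m - e * p) = m - e * p"
  using assms by algebra+

type_synonym blk = "nat \<Rightarrow> nat \<Rightarrow> nat \<Rightarrow> complex"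

definition dl :: "nat \<Rightarrow> nat \<Rightarrow> complex" where "dl i j = (if i = j then 1 else 0)"
definition herm :: "blk \<Rightarrow> bool" where
  "herm A \<longleftrightarrow> (\<forall>n i j. i < 2 \<longrightarrow> j < 2 \<longrightarrow> A n i j = cnj (A n j i))"
definition tt :: "blk \<Rightarrow> nat \<Rightarrow> real" where "tt A n = (Re (A n 0 0) + Re (A n 1 1)) / 2"
definition gg :: "blk \<Rightarrow> nat \<Rightarrow> real" where
  "gg A n = sqrt ((Re (A n 0 0) - Re (A n 1 1))\<^sup>2 + 4 * (cmod (A n 0 1))\<^sup>2)"
definition Zm :: "blk \<Rightarrow> blk" where "Zm A = (\<lambda>n i j. A n i j - of_real (tt A n) * dl i j)"
definition ind :: "int \<Rightarrow> int \<Rightarrow> real" where "ind r k = (if k = r then 1 else 0)"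
definition rr :: "real \<Rightarrow> real \<Rightarrow> int" where "rr \<eta> x = \<lfloor>x / \<eta>\<rfloor>"
definition mm :: "real \<Rightarrow> blk \<Rightarrow> int \<Rightarrow> nat \<Rightarrow> real" where
  "mm \<eta> A k n = (if gg A n < \<eta> then ind (rr \<eta> (tt A n)) k
      else (ind (rr \<eta> (tt A n - gg A n / 2)) k + ind (rr \<eta> (tt A n + gg A n / 2)) k) / 2)"
definition ee :: "real \<Rightarrow> blk \<Rightarrow> int \<Rightarrow> nat \<Rightarrow> real" where
  "ee \<eta> A k n = (if gg A n < \<eta> then 0
      else ind (rr \<eta> (tt A n + gg A n / 2)) k - ind (rr \<eta> (tt A n - gg A n / 2)) k)"
definition PP :: "real \<Rightarrow> blk \<Rightarrow> int \<Rightarrow> blk" where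
  "PP \<eta> A k = (\<lambda>n i j. of_real (mm \<eta> A k n) * dl i j + of_real (ee \<eta> A k n / gg A n) * Zm A n i j)"

lemma real_of_cnj: assumes "z = cnj z" shows "z = of_real (Re z)"
proof -
  have "Im z = 0" using arg_cong[OF assms, of Im] by simp
  then show ?thesis by (simp add: complex_eq_iff)
qed

lemma herm_D: assumes "herm A"
  shows "A n 0 0 = of_real (Re (A n 0 0))" "A n 1 1 = of_real (Re (A n 1 1))" "A n 1 0 = cnj (A n 0 1)"
proof -
  have h: "\<forall>n i j. i < 2 \<longrightarrow> j < 2 \<longrightarrow> A n i j = cnj (A n j i)" using assms unfolding herm_def .
  have "A n 0 0 = cnj (A n 0 0)" "A n 1 1 = cnj (A n 1 1)" "A n 1 0 = cnj (A n 0 1)"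
    using spec[OF spec[OF spec[OF h, of n], of 0], of 0] spec[OF spec[OF spec[OF h, of n], of 1], of 1]
      spec[OF spec[OF spec[OF h, of n], of 1], of 0] by simp_all
  then show "A n 0 0 = of_real (Re (A n 0 0))" "A n 1 1 = of_real (Re (A n 1 1))" "A n 1 0 = cnj (A n 0 1)"
    using real_of_cnj by blast+
qed

lemma Zm_vals: assumes "herm A"
  shows "Zm A n 0 0 = of_real ((Re (A n 0 0) - Re (A n 1 1)) / 2)"
    "Zm A n 1 1 = - of_real ((Re (A n 0 0) - Re (A n 1 1)) / 2)"
    "Zm A n 0 1 = A n 0 1" "Zm A n 1 0 = A n 1 0"
proof -
  note h = herm_D[OF assms, of n]
  have r1: "Re (A n 0 0) - tt A n = (Re (A n 0 0) - Re (A n 1 1)) / 2" by (simp add: tt_def field_simps)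
  have r2: "Re (A n 1 1) - tt A n = - ((Re (A n 0 0) - Re (A n 1 1)) / 2)" by (simp add: tt_def field_simps)
  have "Zm A n 0 0 = of_real (Re (A n 0 0)) - of_real (tt A n)" unfolding Zm_def dl_def by (subst h(1)) simp
  also have "\<dots> = of_real (Re (A n 0 0) - tt A n)" by (simp only: of_real_diff)
  finally show "Zm A n 0 0 = of_real ((Re (A n 0 0) - Re (A n 1 1)) / 2)" unfolding r1 .
  have "Zm A n 1 1 = of_real (Re (A n 1 1)) - of_real (tt A n)" unfolding Zm_def dl_def by (subst h(2)) simp
  also have "\<dots> = of_real (Re (A n 1 1) - tt A n)" by (simp only: of_real_diff)
  finally show "Zm A n 1 1 = - of_real ((Re (A n 0 0) - Re (A n 1 1)) / 2)" unfolding r2 by simp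
  show "Zm A n 0 1 = A n 0 1" "Zm A n 1 0 = A n 1 0" by (simp_all add: Zm_def dl_def)
qed

lemma gg_nonneg: "0 \<le> gg A n" by (simp add: gg_def)

lemma gg_sq: "(gg A n)\<^sup>2 = (Re (A n 0 0) - Re (A n 1 1))\<^sup>2 + 4 * (cmod (A n 0 1))\<^sup>2"
  unfolding gg_def by simp

lemma Zm_rel: assumes "herm A"
  shows "4 * (Zm A n 0 0 * Zm A n 0 0 + Zm A n 0 1 * Zm A n 1 0) = of_real ((gg A n)\<^sup>2)"
proof -
  have "Zm A n 0 1 * Zm A n 1 0 = of_real ((cmod (A n 0 1))\<^sup>2)"
    unfolding Zm_vals[OF assms] herm_D(3)[OF assms] by (rule complex_norm_square[symmetric])
  define u where "u = (Re (A n 0 0) - Re (A n 1 1)) / 2"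
  define w where "w = (cmod (A n 0 1))\<^sup>2"
  have e1: "4 * (Zm A n 0 0 * Zm A n 0 0 + Zm A n 0 1 * Zm A n 1 0) = 4 * (of_real u * of_real u + of_real w)"
    unfolding Zm_vals(1)[OF assms] \<open>Zm A n 0 1 * Zm A n 1 0 = _\<close> u_def w_def by simp
  have e2: "4 * (of_real u * of_real u + of_real w) = (of_real (4 * (u * u + w)) :: complex)" by simp
  have e3: "4 * (u * u + w) = (gg A n)\<^sup>2" unfolding gg_sq u_def w_def by (simp add: power2_eq_square field_simps)
  show ?thesis unfolding e1 e2 e3 ..
qed

lemma Zm_bound: assumes "herm A" "i < 2" "j < 2" shows "cmod (Zm A n i j) \<le> gg A n / 2"
proof -
  have a: "\<bar>(Re (A n 0 0) - Re (A n 1 1)) / 2\<bar> \<le> gg A n / 2"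
  proof -
    have "\<bar>Re (A n 0 0) - Re (A n 1 1)\<bar> \<le> gg A n" unfolding gg_def
      by (rule real_le_rsqrt) (simp add: power2_abs)
    then show ?thesis by simp
  qed
  have b: "cmod (A n 0 1) \<le> gg A n / 2"
  proof -
    have "2 * cmod (A n 0 1) \<le> gg A n" unfolding gg_def
      by (rule real_le_rsqrt) (simp add: power_mult_distrib)
    then show ?thesis by simp
  qed
  have z00: "cmod (Zm A n 0 0) \<le> gg A n / 2" unfolding Zm_vals(1)[OF assms(1)] norm_of_real using a .
  have z11: "cmod (Zm A n 1 1) \<le> gg A n / 2" unfolding Zm_vals(2)[OF assms(1)] norm_minus_cancel norm_of_real using a .
  have z01: "cmod (Zm A n 0 1) \<le> gg A n / 2" unfolding Zm_vals(3)[OF assms(1)] using b .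
  have z10: "cmod (Zm A n 1 0) \<le> gg A n / 2" unfolding Zm_vals(4)[OF assms(1)] herm_D(3)[OF assms(1)] complex_mod_cnj using b .
  have "i = 0 \<or> i = 1" "j = 0 \<or> j = 1" using assms by auto
  then show ?thesis using z00 z01 z10 z11 by (elim disjE) simp_all
qed

lemma ind_sq: "ind r k * ind r k = ind r k" by (simp add: ind_def)
lemma ind_01: "ind r k = 0 \<or> ind r k = 1" by (simp add: ind_def)

lemma mm_ee_rel: assumes "\<not> gg A n < \<eta>"
  shows "4 * mm \<eta> A k n * mm \<eta> A k n + ee \<eta> A k n * ee \<eta> A k n = 4 * mm \<eta> A k n"
    "2 * mm \<eta> A k n * ee \<eta> A k n = ee \<eta> A k n"
proof -
  define x where "x = ind (rr \<eta> (tt A n - gg A n / 2)) k"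
  define y where "y = ind (rr \<eta> (tt A n + gg A n / 2)) k"
  have x: "x * x = x" and y: "y * y = y" unfolding x_def y_def by (rule ind_sq)+
  have m: "mm \<eta> A k n = (x + y) / 2" and e: "ee \<eta> A k n = y - x"
    using assms by (simp_all add: mm_def ee_def x_def y_def)
  have x01: "x = 0 \<or> x = 1" and y01: "y = 0 \<or> y = 1" unfolding x_def y_def by (rule ind_01)+
  show "4 * mm \<eta> A k n * mm \<eta> A k n + ee \<eta> A k n * ee \<eta> A k n = 4 * mm \<eta> A k n"
    unfolding m e using x01 y01 by (elim disjE) simp_all
  show "2 * mm \<eta> A k n * ee \<eta> A k n = ee \<eta> A k n"
    unfolding m e using x01 y01 by (elim disjE) simp_all
qed

lemma PP_small_case: assumes "gg A n < \<eta>" shows "PP \<eta> A k n i j = of_real (mm \<eta> A k n) * dl i j"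
  using assms by (simp add: PP_def ee_def)

lemma mm_small_case: assumes "gg A n < \<eta>" shows "mm \<eta> A k n = 0 \<or> mm \<eta> A k n = 1"
  using assms ind_01 by (simp add: mm_def)

lemma PP_idem: assumes H: "herm A" and \<eta>: "\<eta> > 0" and ij: "i < 2" "j < 2"
  shows "mprod (PP \<eta> A k) (PP \<eta> A k) n i j = PP \<eta> A k n i j"
proof (cases "gg A n < \<eta>")
  case True
  have m: "of_real (mm \<eta> A k n) * of_real (mm \<eta> A k n) = (of_real (mm \<eta> A k n) :: complex)"
    using mm_small_case[OF True, of k] by auto
  have "i = 0 \<or> i = 1" "j = 0 \<or> j = 1" using ij by auto
  then show ?thesis unfolding mprod_def PP_small_case[OF True] using m
    by (elim disjE) (simp_all add: dl_def)
next
  case False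
  have g0: "gg A n > 0" using False \<eta> by linarith
  define M where "M = (of_real (mm \<eta> A k n) :: complex)"
  define E where "E = (of_real (ee \<eta> A k n) :: complex)"
  define ig where "ig = (of_real (1 / gg A n) :: complex)"
  define p where "p = ig * Zm A n 0 0"
  define q where "q = ig * Zm A n 0 1"
  define r where "r = ig * Zm A n 1 0"
  have c: "(of_real (ee \<eta> A k n / gg A n) :: complex) = E * ig" by (simp add: E_def ig_def)
  have P00: "PP \<eta> A k n 0 0 = M + E * p" unfolding PP_def c M_def p_def by (simp add: dl_def)
  have P01: "PP \<eta> A k n 0 1 = E * q" unfolding PP_def c q_def by (simp add: dl_def)
  have P10: "PP \<eta> A k n 1 0 = E * r" unfolding PP_def c r_def by (simp add: dl_def)
  have P11: "PP \<eta> A k n 1 1 = M - E * p" unfolding PP_def c M_def p_def Zm_vals(2)[OF H] Zm_vals(1)[OF H]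
    by (simp add: dl_def)
  have h1: "4 * (p * p + q * r) = 1"
  proof -
    have "4 * (p * p + q * r) = ig * ig * (4 * (Zm A n 0 0 * Zm A n 0 0 + Zm A n 0 1 * Zm A n 1 0))"
      unfolding p_def q_def r_def by (simp add: algebra_simps)
    also have "\<dots> = ig * ig * of_real ((gg A n)\<^sup>2)" unfolding Zm_rel[OF H] ..
    also have "\<dots> = 1" unfolding ig_def using g0 by (simp add: power2_eq_square)
    finally show ?thesis .
  qed
  have h2: "4 * M * M + E * E = 4 * M" and h3: "2 * M * E = E"
    using arg_cong[OF mm_ee_rel(1)[OF False, of k], of complex_of_real]
      arg_cong[OF mm_ee_rel(2)[OF False, of k], of complex_of_real]
    unfolding M_def E_def by simp_all
  note I = idem_abs[OF h1 h2 h3]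
  have "i = 0 \<or> i = 1" "j = 0 \<or> j = 1" using ij by auto
  then show ?thesis unfolding mprod_def
    by (elim disjE) (simp_all only: P00 P01 P10 P11 I One_nat_def[symmetric])
qed

lemma PP_herm: assumes H: "herm A" and ij: "i < 2" "j < 2"
  shows "madj (PP \<eta> A k) n i j = PP \<eta> A k n i j"
proof -
  have h: "A n i j = cnj (A n j i)" using H ij unfolding herm_def by blast
  have "cnj (Zm A n j i) = Zm A n i j" unfolding Zm_def dl_def using h by auto
  then show ?thesis unfolding madj_def PP_def by (simp add: dl_def)
qed

lemma fe_affine: assumes a: "alpha_ok \<alpha>" and C: "\<And>i j. C n i j = x * dl i j + y * A n i j"
  shows "fe \<alpha> C n 1 0 = y * fe \<alpha> A n 1 0" "fe \<alpha> C n 0 1 = y * fe \<alpha> A n 0 1"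
  using orth_c[OF a] unfolding fe_expand C dl_def by simp_all algebra+

lemma PP_affine: "PP \<eta> A k n i j = (of_real (mm \<eta> A k n) - of_real (ee \<eta> A k n / gg A n) * of_real (tt A n)) * dl i j
   + of_real (ee \<eta> A k n / gg A n) * A n i j"
  unfolding PP_def Zm_def by (simp add: algebra_simps)

lemma ee_abs: "\<bar>ee \<eta> A k n\<bar> \<le> 1"
proof -
  have "\<bar>ind x k - ind y k\<bar> \<le> 1" for x y using ind_01[of x k] ind_01[of y k] by auto
  then show ?thesis unfolding ee_def by simp
qed

lemma mm_abs: "\<bar>mm \<eta> A k n\<bar> \<le> 1"
proof -
  have "\<bar>(ind x k + ind y k) / 2\<bar> \<le> 1" for x y using ind_01[of x k] ind_01[of y k] by auto
  moreover have "\<bar>ind x k\<bar> \<le> 1" for x using ind_01[of x k] by auto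
  ultimately show ?thesis unfolding mm_def by simp
qed

lemma ee_g_bound: assumes "\<eta> > 0" shows "\<bar>ee \<eta> A k n / gg A n\<bar> \<le> 1 / \<eta>"
proof (cases "gg A n < \<eta>")
  case True
  then have "ee \<eta> A k n = 0" by (simp add: ee_def)
  then show ?thesis using assms by simp
next
  case False
  have g0: "gg A n > 0" using False assms by linarith
  have ge: "\<eta> \<le> gg A n" using False by linarith
  have "\<bar>ee \<eta> A k n\<bar> / gg A n \<le> 1 / \<eta>"
    using frac_le[of 1 "\<bar>ee \<eta> A k n\<bar>" \<eta> "gg A n"] ee_abs[of \<eta> A k n] assms ge by linarith
  moreover have "\<bar>ee \<eta> A k n / gg A n\<bar> = \<bar>ee \<eta> A k n\<bar> / gg A n" using g0 by (simp add: abs_divide)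
  ultimately show ?thesis by linarith
qed

lemma PP_bnd: assumes H: "herm A" and \<eta>: "\<eta> > 0" shows "bnd (PP \<eta> A k) 2"
  unfolding bnd_def
proof (intro allI impI)
  fix n i j :: nat assume ij: "i < 2" "j < 2"
  have m: "\<bar>mm \<eta> A k n\<bar> \<le> 1" by (rule mm_abs)
  have z: "cmod (of_real (ee \<eta> A k n / gg A n) * Zm A n i j) \<le> 1"
  proof (cases "gg A n < \<eta>")
    case True
    then have "ee \<eta> A k n = 0" by (simp add: ee_def)
    then show ?thesis by simp
  next
    case False
    have g0: "gg A n > 0" using False \<eta> by linarith
    have e: "\<bar>ee \<eta> A k n\<bar> \<le> 1" by (rule ee_abs)
    have zb: "cmod (Zm A n i j) \<le> gg A n / 2" by (rule Zm_bound[OF H ij])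
    have "cmod (of_real (ee \<eta> A k n / gg A n) * Zm A n i j) = \<bar>ee \<eta> A k n\<bar> / gg A n * cmod (Zm A n i j)"
      using g0 by (simp add: norm_mult norm_divide abs_divide)
    also have "\<dots> \<le> 1 / gg A n * (gg A n / 2)"
    proof (rule mult_mono)
      show "\<bar>ee \<eta> A k n\<bar> / gg A n \<le> 1 / gg A n" using e g0 by (simp add: divide_right_mono)
    qed (use zb g0 in auto)
    also have "\<dots> \<le> 1" using g0 by simp
    finally show ?thesis .
  qed
  have d: "cmod (of_real (mm \<eta> A k n) * dl i j) \<le> 1"
    using m by (simp add: dl_def norm_mult)
  have "cmod (PP \<eta> A k n i j) \<le> cmod (of_real (mm \<eta> A k n) * dl i j) + cmod (of_real (ee \<eta> A k n / gg A n) * Zm A n i j)"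
    unfolding PP_def by (rule norm_triangle_ineq)
  also have "\<dots> \<le> 1 + 1" using d z by linarith
  finally show "cmod (PP \<eta> A k n i j) \<le> 2" by simp
qed

lemma PP_proj: assumes H: "herm A" and \<eta>: "\<eta> > 0" shows "is_projection (mk_op (PP \<eta> A k))"
  unfolding is_projection_def
proof (intro conjI)
  note B = PP_bnd[OF H \<eta>, of k]
  show "mk_op (PP \<eta> A k) \<in> bounded_ops" by (rule mk_op_bounded[OF B])
  have "mk_op (PP \<eta> A k) \<circ> mk_op (PP \<eta> A k) = mk_op (mprod (PP \<eta> A k) (PP \<eta> A k))" by (rule mk_op_comp[OF B])
  also have "\<dots> = mk_op (PP \<eta> A k)" by (rule mk_op_cong) (rule PP_idem[OF H \<eta>])
  finally show "mk_op (PP \<eta> A k) \<circ> mk_op (PP \<eta> A k) = mk_op (PP \<eta> A k)" .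
  have "adj (mk_op (PP \<eta> A k)) = mk_op (madj (PP \<eta> A k))" by (rule mk_op_adj[OF B])
  also have "\<dots> = mk_op (PP \<eta> A k)" by (rule mk_op_cong) (rule PP_herm[OF H])
  finally show "adj (mk_op (PP \<eta> A k)) = mk_op (PP \<eta> A k)" .
qed

lemma PP_good: assumes a: "\<forall>X\<in>\<X>. alpha_ok (\<alpha> X)" and H: "herm A" and g: "good \<X> \<alpha> A" and \<eta>: "\<eta> > 0"
  shows "good \<X> \<alpha> (PP \<eta> A k)"
  unfolding good_def
proof
  fix X assume X: "X \<in> \<X>"
  have aX: "alpha_ok (\<alpha> X)" using a X by blast
  have s: "small X (\<lambda>n. fe (\<alpha> X) A n 1 0)" "small X (\<lambda>n. fe (\<alpha> X) A n 0 1)" using g X by (auto simp: good_def)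
  have c: "cmod (of_real (ee \<eta> A k n / gg A n)) \<le> 1 / \<eta>" for n
    unfolding norm_of_real by (rule ee_g_bound[OF \<eta>])
  have e1: "fe (\<alpha> X) (PP \<eta> A k) n 1 0 = of_real (ee \<eta> A k n / gg A n) * fe (\<alpha> X) A n 1 0" for n
    by (rule fe_affine(1)[OF aX PP_affine])
  have e2: "fe (\<alpha> X) (PP \<eta> A k) n 0 1 = of_real (ee \<eta> A k n / gg A n) * fe (\<alpha> X) A n 0 1" for n
    by (rule fe_affine(2)[OF aX PP_affine])
  have "small X (\<lambda>n. fe (\<alpha> X) (PP \<eta> A k) n 1 0)" unfolding e1 by (rule small_mult[OF s(1) c])
  moreover have "small X (\<lambda>n. fe (\<alpha> X) (PP \<eta> A k) n 0 1)" unfolding e2 by (rule small_mult[OF s(2) c])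
  ultimately show "small X (\<lambda>n. fe (\<alpha> X) (PP \<eta> A k) n 1 0) \<and> small X (\<lambda>n. fe (\<alpha> X) (PP \<eta> A k) n 0 1)" ..
qed

definition WW :: "real \<Rightarrow> blk \<Rightarrow> int set \<Rightarrow> blk" where
  "WW \<eta> A J = (\<lambda>n i j. \<Sum>k\<in>J. of_real (of_int k * \<eta>) * PP \<eta> A k n i j)"

lemma WW_eq: "WW \<eta> A J n i j = of_real (\<Sum>k\<in>J. of_int k * \<eta> * mm \<eta> A k n) * dl i j
    + of_real ((\<Sum>k\<in>J. of_int k * \<eta> * ee \<eta> A k n) / gg A n) * Zm A n i j"
proof -
  have t: "of_real (of_int k * \<eta>) * PP \<eta> A k n i j = of_real (of_int k * \<eta> * mm \<eta> A k n) * dl i j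
      + of_real (of_int k * \<eta> * ee \<eta> A k n / gg A n) * Zm A n i j" for k
    by (simp add: PP_def algebra_simps)
  show ?thesis unfolding WW_def t sum.distrib
    by (simp add: sum_distrib_right[symmetric] sum_divide_distrib[symmetric])
qed

lemma sum_ind: "finite J \<Longrightarrow> (\<Sum>k\<in>J. of_int k * \<eta> * ind r k) = (if r \<in> J then of_int r * \<eta> else 0)"
proof -
  assume J: "finite J"
  have "(\<Sum>k\<in>J. of_int k * \<eta> * ind r k) = (\<Sum>k\<in>J. if k = r then of_int k * \<eta> else 0)"
    by (rule sum.cong) (auto simp: ind_def)
  also have "\<dots> = (if r \<in> J then of_int r * \<eta> else 0)" using sum.delta[OF J, of r "\<lambda>k. of_int k * \<eta>"] by simp
  finally show ?thesis .
qed

lemma sum_mm_small: assumes J: "finite J" "rr \<eta> (tt A n) \<in> J" and g: "gg A n < \<eta>"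
  shows "(\<Sum>k\<in>J. of_int k * \<eta> * mm \<eta> A k n) = of_int (rr \<eta> (tt A n)) * \<eta>"
    "(\<Sum>k\<in>J. of_int k * \<eta> * ee \<eta> A k n) = 0"
  using sum_ind[OF J(1)] J(2) g by (simp_all add: mm_def ee_def)

lemma sum_mm_big: assumes J: "finite J" "rr \<eta> (tt A n - gg A n / 2) \<in> J" "rr \<eta> (tt A n + gg A n / 2) \<in> J"
  and g: "\<not> gg A n < \<eta>"
  shows "(\<Sum>k\<in>J. of_int k * \<eta> * mm \<eta> A k n) = (of_int (rr \<eta> (tt A n - gg A n / 2)) * \<eta> + of_int (rr \<eta> (tt A n + gg A n / 2)) * \<eta>) / 2"
    "(\<Sum>k\<in>J. of_int k * \<eta> * ee \<eta> A k n) = of_int (rr \<eta> (tt A n + gg A n / 2)) * \<eta> - of_int (rr \<eta> (tt A n - gg A n / 2)) * \<eta>"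
proof -
  let ?r1 = "rr \<eta> (tt A n - gg A n / 2)" and ?r2 = "rr \<eta> (tt A n + gg A n / 2)"
  have "(\<Sum>k\<in>J. of_int k * \<eta> * mm \<eta> A k n) = (\<Sum>k\<in>J. of_int k * \<eta> * ind ?r1 k / 2 + of_int k * \<eta> * ind ?r2 k / 2)"
    using g by (intro sum.cong) (auto simp: mm_def field_simps)
  also have "\<dots> = (\<Sum>k\<in>J. of_int k * \<eta> * ind ?r1 k) / 2 + (\<Sum>k\<in>J. of_int k * \<eta> * ind ?r2 k) / 2"
    by (simp add: sum.distrib sum_divide_distrib)
  finally show "(\<Sum>k\<in>J. of_int k * \<eta> * mm \<eta> A k n) = (of_int ?r1 * \<eta> + of_int ?r2 * \<eta>) / 2"
    using sum_ind[OF J(1)] J(2,3) by simp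
  have "(\<Sum>k\<in>J. of_int k * \<eta> * ee \<eta> A k n) = (\<Sum>k\<in>J. of_int k * \<eta> * ind ?r2 k - of_int k * \<eta> * ind ?r1 k)"
    using g by (intro sum.cong) (auto simp: ee_def field_simps)
  also have "\<dots> = (\<Sum>k\<in>J. of_int k * \<eta> * ind ?r2 k) - (\<Sum>k\<in>J. of_int k * \<eta> * ind ?r1 k)"
    by (simp add: sum_subtractf)
  finally show "(\<Sum>k\<in>J. of_int k * \<eta> * ee \<eta> A k n) = of_int ?r2 * \<eta> - of_int ?r1 * \<eta>"
    using sum_ind[OF J(1)] J(2,3) by simp
qed

lemma comb_bound:
  assumes "\<bar>x\<bar> \<le> a" "\<bar>y\<bar> * cmod z \<le> b"
  shows "cmod (of_real x * dl i j + of_real y * z) \<le> a + b"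
proof -
  have "cmod (of_real x * dl i j + of_real y * z) \<le> cmod (of_real x * dl i j) + cmod (of_real y * z)"
    by (rule norm_triangle_ineq)
  moreover have "cmod (of_real x * dl i j) \<le> \<bar>x\<bar>" by (simp add: dl_def norm_mult)
  moreover have "cmod (of_real y * z) = \<bar>y\<bar> * cmod z" by (simp add: norm_mult)
  ultimately show ?thesis using assms by linarith
qed

lemma tt_bound: assumes "bnd A K" shows "\<bar>tt A n\<bar> \<le> K"
proof -
  have "\<bar>Re (A n 0 0)\<bar> \<le> K" using abs_Re_le_cmod[of "A n 0 0"] bndD[OF assms, of 0 0 n] by linarith
  moreover have "\<bar>Re (A n 1 1)\<bar> \<le> K" using abs_Re_le_cmod[of "A n 1 1"] bndD[OF assms, of 1 1 n] by linarith
  ultimately have u: "Re (A n 0 0) + Re (A n 1 1) \<le> 2 * K" "-(Re (A n 0 0) + Re (A n 1 1)) \<le> 2 * K"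
    by (simp_all add: abs_le_iff)
  have "(Re (A n 0 0) + Re (A n 1 1)) / 2 \<le> K" using u(1) by (simp add: field_simps)
  moreover have "- ((Re (A n 0 0) + Re (A n 1 1)) / 2) \<le> K" using u(2) by (simp add: field_simps)
  ultimately show ?thesis unfolding tt_def abs_le_iff by blast
qed

lemma gg_bound: assumes B: "bnd A K" shows "gg A n \<le> 3 * K"
proof -
  have K0: "0 \<le> K" by (rule bnd_nonneg[OF B])
  have "\<bar>Re (A n 0 0)\<bar> \<le> K" using abs_Re_le_cmod[of "A n 0 0"] bndD[OF B, of 0 0 n] by linarith
  moreover have "\<bar>Re (A n 1 1)\<bar> \<le> K" using abs_Re_le_cmod[of "A n 1 1"] bndD[OF B, of 1 1 n] by linarith
  ultimately have "\<bar>Re (A n 0 0) - Re (A n 1 1)\<bar> \<le> 2 * K" by linarith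
  then have a: "(Re (A n 0 0) - Re (A n 1 1))\<^sup>2 \<le> (2 * K)\<^sup>2"
    by (metis abs_ge_zero power2_abs power_mono)
  have "cmod (A n 0 1) \<le> K" using bndD[OF B, of 0 1 n] by simp
  then have b: "(cmod (A n 0 1))\<^sup>2 \<le> K\<^sup>2" by (intro power_mono) auto
  have "(Re (A n 0 0) - Re (A n 1 1))\<^sup>2 + 4 * (cmod (A n 0 1))\<^sup>2 \<le> (3 * K)\<^sup>2"
    using a b mult_nonneg_nonneg[OF K0 K0] unfolding power2_eq_square by linarith
  then have "gg A n \<le> sqrt ((3 * K)\<^sup>2)" unfolding gg_def by (rule real_sqrt_le_mono)
  moreover have "sqrt ((3 * K)\<^sup>2) = 3 * K" by (rule real_sqrt_unique) (use K0 in auto)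
  ultimately show ?thesis by simp
qed

lemma WW_err:
  assumes H: "herm A" and \<eta>: "\<eta> > 0" and B: "bnd A K" and M: "of_int M \<ge> 3 * K / \<eta> + 1"
    and ij: "i < 2" "j < 2"
  shows "cmod (A n i j - WW \<eta> A {-M..M} n i j) \<le> 2 * \<eta>"
proof -
  let ?J = "{-M..M}"
  have K0: "0 \<le> K" by (rule bnd_nonneg[OF B])
  have fin: "finite ?J" by simp
  define t where "t = tt A n"
  define g where "g = gg A n"
  have tb: "\<bar>t\<bar> \<le> K" unfolding t_def by (rule tt_bound[OF B])
  have gb: "g \<le> 3 * K" unfolding g_def by (rule gg_bound[OF B])
  have g0: "0 \<le> g" unfolding g_def by (rule gg_nonneg)
  have inJ: "rr \<eta> x \<in> ?J" if "\<bar>x\<bar> \<le> 3 * K" for x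
    unfolding rr_def by (rule floor_range[OF \<eta> that M])
  have zb: "cmod (Zm A n i j) \<le> g / 2" unfolding g_def by (rule Zm_bound[OF H ij])
  have Aeq: "A n i j = of_real t * dl i j + Zm A n i j" by (simp add: Zm_def t_def)
  define Sm where "Sm = (\<Sum>k\<in>?J. of_int k * \<eta> * mm \<eta> A k n)"
  define Se where "Se = (\<Sum>k\<in>?J. of_int k * \<eta> * ee \<eta> A k n)"
  have diff: "A n i j - WW \<eta> A ?J n i j = of_real (t - Sm) * dl i j + of_real (1 - Se / g) * Zm A n i j"
    unfolding WW_eq Sm_def[symmetric] Se_def[symmetric] g_def[symmetric]
    by (subst Aeq) (simp add: algebra_simps)
  show ?thesis
  proof (cases "g < \<eta>")
    case True
    have r: "rr \<eta> t \<in> ?J" using inJ tb K0 by simp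
    have S: "Sm = of_int (rr \<eta> t) * \<eta>" "Se = 0"
      using sum_mm_small[OF fin, of \<eta> A n] r True unfolding Sm_def Se_def t_def g_def by auto
    have fe: "0 \<le> t - of_int (rr \<eta> t) * \<eta> \<and> t - of_int (rr \<eta> t) * \<eta> < \<eta>"
      unfolding rr_def by (rule floor_err[OF \<eta>])
    have "cmod (of_real (t - Sm) * dl i j + of_real (1 - Se / g) * Zm A n i j) \<le> \<eta> + \<eta>"
    proof (rule comb_bound)
      show "\<bar>t - Sm\<bar> \<le> \<eta>" using fe S by simp
      have "\<bar>1 - Se / g\<bar> * cmod (Zm A n i j) = cmod (Zm A n i j)" using S by simp
      then show "\<bar>1 - Se / g\<bar> * cmod (Zm A n i j) \<le> \<eta>" using zb True g0 by linarith
    qed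
    then show ?thesis unfolding diff by simp
  next
    case False
    have gpos: "g > 0" using False \<eta> by linarith
    define l1 where "l1 = t - g / 2"
    define l2 where "l2 = t + g / 2"
    have r1: "rr \<eta> l1 \<in> ?J" using inJ tb gb g0 unfolding l1_def by (intro inJ) linarith
    have r2: "rr \<eta> l2 \<in> ?J" using inJ tb gb g0 unfolding l2_def by (intro inJ) linarith
    have S: "Sm = (of_int (rr \<eta> l1) * \<eta> + of_int (rr \<eta> l2) * \<eta>) / 2"
        "Se = of_int (rr \<eta> l2) * \<eta> - of_int (rr \<eta> l1) * \<eta>"
      using sum_mm_big[OF fin, of \<eta> A n] r1 r2 False unfolding Sm_def Se_def t_def g_def l1_def l2_def by auto
    define e1 where "e1 = l1 - of_int (rr \<eta> l1) * \<eta>"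
    define e2 where "e2 = l2 - of_int (rr \<eta> l2) * \<eta>"
    have e1b: "0 \<le> e1 \<and> e1 < \<eta>" unfolding e1_def rr_def by (rule floor_err[OF \<eta>])
    have e2b: "0 \<le> e2 \<and> e2 < \<eta>" unfolding e2_def rr_def by (rule floor_err[OF \<eta>])
    have x: "t - Sm = (e1 + e2) / 2" unfolding S e1_def e2_def l1_def l2_def by (simp add: field_simps)
    have y: "1 - Se / g = (e2 - e1) / g" unfolding S e1_def e2_def l1_def l2_def using gpos by (simp add: field_simps)
    have "cmod (of_real (t - Sm) * dl i j + of_real (1 - Se / g) * Zm A n i j) \<le> \<eta> + \<eta>"
    proof (rule comb_bound)
      show "\<bar>t - Sm\<bar> \<le> \<eta>" unfolding x using e1b e2b by simp
      have "\<bar>(e2 - e1) / g\<bar> * cmod (Zm A n i j) \<le> (\<eta> / g) * (g / 2)"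
      proof (rule mult_mono)
        have "\<bar>e2 - e1\<bar> \<le> \<eta>" using e1b e2b by (simp add: abs_le_iff)
        then show "\<bar>(e2 - e1) / g\<bar> \<le> \<eta> / g" using gpos by (simp add: abs_divide divide_right_mono)
      qed (use zb gpos \<eta> in auto)
      also have "\<dots> \<le> \<eta>" using gpos \<eta> by simp
      finally show "\<bar>1 - Se / g\<bar> * cmod (Zm A n i j) \<le> \<eta>" unfolding y .
    qed
    then show ?thesis unfolding diff by simp
  qed
qed

lemma cs_add: "is_cstar_subalg C \<Longrightarrow> S \<in> C \<Longrightarrow> T \<in> C \<Longrightarrow> op_add S T \<in> C"
  unfolding is_cstar_subalg_def by blast
lemma cs_scale: "is_cstar_subalg C \<Longrightarrow> T \<in> C \<Longrightarrow> op_scale c T \<in> C"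
  unfolding is_cstar_subalg_def by blast
lemma cs_limit: "is_cstar_subalg C \<Longrightarrow> T \<in> bounded_ops \<Longrightarrow> (\<And>e. e > 0 \<Longrightarrow> \<exists>S\<in>C. opnorm (op_diff T S) < e) \<Longrightarrow> T \<in> C"
  unfolding is_cstar_subalg_def by blast

lemma bnd_zero: "bnd (\<lambda>n i j. 0) 0" by (simp add: bnd_def)

lemma zero_in: assumes a: "\<forall>X\<in>\<X>. alpha_ok (\<alpha> X)"
  shows "mk_op (\<lambda>n i j. 0) \<in> Mset \<X> \<alpha> \<and> is_projection (mk_op (\<lambda>n i j. 0))"
proof
  have "good \<X> \<alpha> (\<lambda>n i j. 0)" unfolding good_def fe_expand by (simp add: small_zero)
  then show "mk_op (\<lambda>n i j. 0) \<in> Mset \<X> \<alpha>" using mk_Mset[OF a bnd_zero] by simp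
  show "is_projection (mk_op (\<lambda>n i j. 0))" unfolding is_projection_def
  proof (intro conjI)
    show "mk_op (\<lambda>n i j. 0) \<in> bounded_ops" by (rule mk_op_bounded[OF bnd_zero])
    show "mk_op (\<lambda>n i j. 0) \<circ> mk_op (\<lambda>n i j. 0) = mk_op (\<lambda>n i j. 0)"
      unfolding mk_op_comp[OF bnd_zero] by (simp add: mprod_def)
    show "adj (mk_op (\<lambda>n i j. 0)) = mk_op (\<lambda>n i j. 0)"
      unfolding mk_op_adj[OF bnd_zero] by (simp add: madj_def)
  qed
qed

lemma sum_in_C:
  assumes C: "is_cstar_subalg C" and Z: "mk_op (\<lambda>n i j. 0) \<in> C" and fin: "finite J"
    and P: "\<forall>k\<in>J. mk_op (P k) \<in> C"
  shows "mk_op (\<lambda>n i j. \<Sum>k\<in>J. c k * P k n i j) \<in> C"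
  using fin P
proof (induction J rule: finite_induct)
  case empty
  then show ?case using Z by simp
next
  case (insert x F)
  have eq: "(\<lambda>n i j. \<Sum>k\<in>insert x F. c k * P k n i j) = madd (msc (c x) (P x)) (\<lambda>n i j. \<Sum>k\<in>F. c k * P k n i j)"
    using insert(1,2) by (simp add: madd_def msc_def fun_eq_iff)
  have "mk_op (\<lambda>n i j. \<Sum>k\<in>insert x F. c k * P k n i j) = op_add (op_scale (c x) (mk_op (P x))) (mk_op (\<lambda>n i j. \<Sum>k\<in>F. c k * P k n i j))"
    unfolding eq op_scale_mk op_add_mk ..
  moreover have "op_scale (c x) (mk_op (P x)) \<in> C" using insert(4) cs_scale[OF C] by simp
  moreover have "mk_op (\<lambda>n i j. \<Sum>k\<in>F. c k * P k n i j) \<in> C" using insert by simp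
  ultimately show ?case using cs_add[OF C] by simp
qed

lemma herm_in_C:
  assumes C: "is_cstar_subalg C" and PC: "{P \<in> Mset \<X> \<alpha>. is_projection P} \<subseteq> C"
    and a: "\<forall>X\<in>\<X>. alpha_ok (\<alpha> X)" and H: "herm A" and B: "bnd A K" and g: "good \<X> \<alpha> A"
  shows "mk_op A \<in> C"
proof (rule cs_limit[OF C mk_op_bounded[OF B]])
  fix \<epsilon> :: real assume \<epsilon>: "\<epsilon> > 0"
  define \<eta> where "\<eta> = \<epsilon> / 8"
  have \<eta>: "\<eta> > 0" using \<epsilon> by (simp add: \<eta>_def)
  define M :: int where "M = \<lceil>3 * K / \<eta>\<rceil> + 1"
  have M: "of_int M \<ge> 3 * K / \<eta> + 1" unfolding M_def by (simp add: le_of_int_ceiling)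
  define J where "J = {-M..M}"
  have Z: "mk_op (\<lambda>n i j. 0) \<in> C" using zero_in[OF a] PC by blast
  have Pin: "\<forall>k\<in>J. mk_op (PP \<eta> A k) \<in> C"
  proof
    fix k
    have "mk_op (PP \<eta> A k) \<in> Mset \<X> \<alpha>"
      using mk_Mset[OF a PP_bnd[OF H \<eta>]] PP_good[OF a H g \<eta>] by blast
    then show "mk_op (PP \<eta> A k) \<in> C" using PP_proj[OF H \<eta>] PC by blast
  qed
  have SC: "mk_op (WW \<eta> A J) \<in> C"
    unfolding WW_def by (rule sum_in_C[OF C Z _ Pin]) (simp add: J_def)
  have bd: "bnd (msub A (WW \<eta> A J)) (2 * \<eta>)"
    unfolding bnd_def msub_def J_def using WW_err[OF H \<eta> B M] by blast
  have "opnorm (op_diff (mk_op A) (mk_op (WW \<eta> A J))) \<le> 2 * (2 * \<eta>)"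
    unfolding op_diff_mk by (rule opnorm_upper[OF bd])
  also have "\<dots> < \<epsilon>" using \<epsilon> by (simp add: \<eta>_def)
  finally show "\<exists>S\<in>C. opnorm (op_diff (mk_op A) S) < \<epsilon>" using SC by blast
qed

lemma good_sub: "good \<X> \<alpha> B \<Longrightarrow> good \<X> \<alpha> C \<Longrightarrow> good \<X> \<alpha> (msub B C)"
  unfolding good_def fe_msub by (auto intro: small_diff)

lemma Mset_in_C:
  assumes C: "is_cstar_subalg C" and PC: "{P \<in> Mset \<X> \<alpha>. is_projection P} \<subseteq> C"
    and a: "\<forall>X\<in>\<X>. alpha_ok (\<alpha> X)" and T: "T \<in> Mset \<X> \<alpha>"
  shows "T \<in> C"
proof -
  obtain K where K: "bnd (ent T) K" "T = mk_op (ent T)" "good \<X> \<alpha> (ent T)" using Mset_rep[OF a T] by blast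
  define B where "B = ent T"
  define Hh where "Hh = msc (1/2) (madd B (madj B))"
  define Gh where "Gh = msc (- \<i> / 2) (msub B (madj B))"
  have hH: "herm Hh" unfolding herm_def Hh_def msc_def madd_def madj_def by (simp add: algebra_simps)
  have hG: "herm Gh" unfolding herm_def Gh_def msc_def msub_def madj_def by (simp add: algebra_simps)
  have gH: "good \<X> \<alpha> Hh" unfolding Hh_def B_def using K(3) by (intro good_sc good_add good_adj)
  have gG: "good \<X> \<alpha> Gh" unfolding Gh_def B_def using K(3) by (intro good_sc good_sub good_adj)
  have bH: "bnd Hh (cmod (1/2) * (K + K))" unfolding Hh_def B_def using K(1) by (intro bnd_sc bnd_add bnd_adj)
  have bG: "bnd Gh (cmod (- \<i> / 2) * (K + K))" unfolding Gh_def B_def using K(1) by (intro bnd_sc bnd_sub bnd_adj)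
  have HC: "mk_op Hh \<in> C" by (rule herm_in_C[OF C PC a hH bH gH])
  have GC: "mk_op Gh \<in> C" by (rule herm_in_C[OF C PC a hG bG gG])
  have "madd Hh (msc \<i> Gh) = B"
    unfolding Hh_def Gh_def madd_def msc_def msub_def madj_def by (simp add: fun_eq_iff algebra_simps)
  then have "op_add (mk_op Hh) (op_scale \<i> (mk_op Gh)) = T"
    unfolding op_scale_mk op_add_mk using K(2) B_def by simp
  moreover have "op_add (mk_op Hh) (op_scale \<i> (mk_op Gh)) \<in> C"
    using cs_add[OF C HC cs_scale[OF C GC]] .
  ultimately show ?thesis by simp
qed

theorem lemma4p18:
  fixes \<X> :: "nat set set" and \<alpha> :: "nat set \<Rightarrow> real"
  assumes "wide \<X>" and "coherent \<X> \<alpha>"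
  shows "cstar_gen {P \<in> Mset \<X> \<alpha>. is_projection P} = Mset \<X> \<alpha>"
proof -
  have a: "\<forall>X\<in>\<X>. alpha_ok (\<alpha> X)" using assms(2) unfolding coherent_def alpha_ok_def
    by (meson less_trans zero_less_divide_iff zero_less_numeral)
  show ?thesis unfolding cstar_gen_def
  proof
    show "\<Inter> {C. {P \<in> Mset \<X> \<alpha>. is_projection P} \<subseteq> C \<and> is_cstar_subalg C} \<subseteq> Mset \<X> \<alpha>"
      by (rule Inter_lower) (use Mset_cstar[OF a] in blast)
    show "Mset \<X> \<alpha> \<subseteq> \<Inter> {C. {P \<in> Mset \<X> \<alpha>. is_projection P} \<subseteq> C \<and> is_cstar_subalg C}"
      using Mset_in_C[OF _ _ a] by blast
  qed
qed

end
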